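(* Let $z\in\mathbb C\setminus\{0\}$, $\nu\in\mathrm{FA}(\partial\mathbb T)$ and $\gamma\in\mathrm{Aut}(\mathbb T)$. Then $\pi_z(\gamma)\nu=\nu$ if and only if $$z^{d(o,\iota(e))}\,\nu(\partial e)=z^{d(o,\iota(\gamma e))}\,\nu(\partial(\gamma e))$$ for every oriented edge $e$ of $\mathbb T$ that points away from $o$ and away from $\gamma^{-1}o$.
   Context: $\mathbb T$ is a locally finite tree without vertices of degree $\le1$, with graph metric $d$ on vertices and a fixed base vertex $o$. For an oriented edge $e$ with initial vertex $\iota(e)$ and terminal vertex $\tau(e)$, $e$ points away from a vertex $x$ if $d(x,\tau(e))=d(x,\iota(e))+1$. $\partial\mathbb T$ is the set of ends of $\mathbb T$ (equivalence classes of geodesic rays, two rays being equivalent if they share infinitely many edges); for every vertex $x$ and end $\omega$ there is a unique geodesic ray from $x$ to $\omega$. The forward set $\partial e\subseteq\partial\mathbb T$ of an oriented edge $e$ consists of the ends $\omega$ whose ray from $\iota(e)$ starts with $e$; forward sets form a basis of compact open sets of a compact totally disconnected topology on $\partial\mathbb T$. $\mathrm{FA}(\partial\mathbb T)$ is the space of finitely additive complex-valued set functions on the clopen subsets of $\partial\mathbb T$; a locally constant $g$ can be integrated: $\int_Ag\,d\nu=\sum_ig_i\nu(A_i)$ for a finite clopen partition $A=\bigsqcup A_i$ with $g\equiv g_i$ on $A_i$. For an end $\omega$ and vertices $x,y$, $h_\omega(x,y):=d(x,w)-d(y,w)$ for any vertex $w$ lying on both rays from $x$ and from $y$ to $\omega$.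 $\mathrm{Aut}(\mathbb T)$ acts on ends, and on $\mathrm{FA}(\partial\mathbb T)$ by $(\gamma\nu)(A)=\nu(\gamma^{-1}A)$. The twisted action is $(\pi_z(\gamma)\nu)(A):=\int_A c_\gamma\,d(\gamma\nu)$, where $c_\gamma(\omega)=z^{h_\omega(\gamma o,\,o)}$ (a locally constant function). *)

theory Defs
  imports "HOL-Analysis.Analysis"
begin

text \<open>Trees: vertices are all elements of the type 'v; E is the adjacency relation.\<close>

definition is_walk :: "('v \<Rightarrow> 'v \<Rightarrow> bool) \<Rightarrow> 'v list \<Rightarrow> bool" where
  "is_walk E xs \<longleftrightarrow> xs \<noteq> [] \<and> (\<forall>i. Suc i < length xs \<longrightarrow> E (xs ! i) (xs ! Suc i))"

definition is_tree :: "('v \<Rightarrow> 'v \<Rightarrow> bool) \<Rightarrow> bool" where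
  "is_tree E \<longleftrightarrow> (\<forall>x y. E x y \<longrightarrow> E y x) \<and> (\<forall>x. \<not> E x x)
     \<and> (\<forall>x y. \<exists>xs. is_walk E xs \<and> hd xs = x \<and> last xs = y)
     \<and> \<not> (\<exists>xs. length xs \<ge> 3 \<and> distinct xs \<and> is_walk E xs \<and> E (last xs) (hd xs))"

definition locally_finite_graph :: "('v \<Rightarrow> 'v \<Rightarrow> bool) \<Rightarrow> bool" where
  "locally_finite_graph E \<longleftrightarrow> (\<forall>x. finite {y. E x y})"

definition no_leaves :: "('v \<Rightarrow> 'v \<Rightarrow> bool) \<Rightarrow> bool" where
  "no_leaves E \<longleftrightarrow> (\<forall>x. card {y. E x y} \<ge> 2)"

definition tdist :: "('v \<Rightarrow> 'v \<Rightarrow> bool) \<Rightarrow> 'v \<Rightarrow> 'v \<Rightarrow> nat" where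
  "tdist E x y = (LEAST n. \<exists>xs. is_walk E xs \<and> hd xs = x \<and> last xs = y \<and> length xs = Suc n)"

definition geod_ray :: "('v \<Rightarrow> 'v \<Rightarrow> bool) \<Rightarrow> (nat \<Rightarrow> 'v) \<Rightarrow> bool" where
  "geod_ray E r \<longleftrightarrow> (\<forall>m n. tdist E (r m) (r n) = (if m \<le> n then n - m else m - n))"

definition ray_edges :: "(nat \<Rightarrow> 'v) \<Rightarrow> 'v set set" where
  "ray_edges r = {{r n, r (Suc n)} | n. True}"

definition ray_equiv :: "('v \<Rightarrow> 'v \<Rightarrow> bool) \<Rightarrow> ((nat \<Rightarrow> 'v) \<times> (nat \<Rightarrow> 'v)) set" where
  "ray_equiv E = {(r, s). geod_ray E r \<and> geod_ray E s \<and> infinite (ray_edges r \<inter> ray_edges s)}"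

definition ends :: "('v \<Rightarrow> 'v \<Rightarrow> bool) \<Rightarrow> (nat \<Rightarrow> 'v) set set" where
  "ends E = {r. geod_ray E r} // ray_equiv E"

definition ray_to :: "('v \<Rightarrow> 'v \<Rightarrow> bool) \<Rightarrow> 'v \<Rightarrow> (nat \<Rightarrow> 'v) set \<Rightarrow> nat \<Rightarrow> 'v" where
  "ray_to E x \<omega> = (THE r. r \<in> \<omega> \<and> r 0 = x)"

definition fwd :: "('v \<Rightarrow> 'v \<Rightarrow> bool) \<Rightarrow> 'v \<times> 'v \<Rightarrow> (nat \<Rightarrow> 'v) set set" where
  "fwd E e = {\<omega> \<in> ends E. ray_to E (fst e) \<omega> 1 = snd e}"

definition oriented_edges :: "('v \<Rightarrow> 'v \<Rightarrow> bool) \<Rightarrow> ('v \<times> 'v) set" where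
  "oriented_edges E = {(u, v). E u v}"

definition points_away :: "('v \<Rightarrow> 'v \<Rightarrow> bool) \<Rightarrow> 'v \<times> 'v \<Rightarrow> 'v \<Rightarrow> bool" where
  "points_away E e x \<longleftrightarrow> tdist E x (snd e) = tdist E x (fst e) + 1"

definition ends_top :: "('v \<Rightarrow> 'v \<Rightarrow> bool) \<Rightarrow> (nat \<Rightarrow> 'v) set topology" where
  "ends_top E = topology_generated_by (fwd E ` oriented_edges E)"

definition clopen_ends :: "('v \<Rightarrow> 'v \<Rightarrow> bool) \<Rightarrow> (nat \<Rightarrow> 'v) set set \<Rightarrow> bool" where
  "clopen_ends E A \<longleftrightarrow> openin (ends_top E) A \<and> closedin (ends_top E) A"

text \<open>Finitely additive complex set functions on the clopen sets
  (values on non-clopen sets are irrelevant and never used).\<close>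
definition FA :: "('v \<Rightarrow> 'v \<Rightarrow> bool) \<Rightarrow> ((nat \<Rightarrow> 'v) set set \<Rightarrow> complex) set" where
  "FA E = {\<nu>. \<forall>A B. clopen_ends E A \<and> clopen_ends E B \<and> A \<inter> B = {} \<longrightarrow> \<nu> (A \<union> B) = \<nu> A + \<nu> B}"

definition fa_integral :: "('v \<Rightarrow> 'v \<Rightarrow> bool) \<Rightarrow> (nat \<Rightarrow> 'v) set set
     \<Rightarrow> ((nat \<Rightarrow> 'v) set \<Rightarrow> complex) \<Rightarrow> ((nat \<Rightarrow> 'v) set set \<Rightarrow> complex) \<Rightarrow> complex" where
  "fa_integral E A g \<nu> = (SOME s. \<exists>P. finite P \<and> \<Union>P = A
      \<and> (\<forall>B\<in>P. \<forall>C\<in>P. B \<noteq> C \<longrightarrow> B \<inter> C = {})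
      \<and> (\<forall>B\<in>P. clopen_ends E B \<and> B \<noteq> {} \<and> (\<forall>\<omega>\<in>B. \<forall>\<omega>'\<in>B. g \<omega> = g \<omega>'))
      \<and> s = (\<Sum>B\<in>P. g (SOME \<omega>. \<omega> \<in> B) * \<nu> B))"

definition horo :: "('v \<Rightarrow> 'v \<Rightarrow> bool) \<Rightarrow> (nat \<Rightarrow> 'v) set \<Rightarrow> 'v \<Rightarrow> 'v \<Rightarrow> int" where
  "horo E \<omega> x y = (THE k. \<forall>w. w \<in> range (ray_to E x \<omega>) \<and> w \<in> range (ray_to E y \<omega>)
        \<longrightarrow> k = int (tdist E x w) - int (tdist E y w))"

definition Aut :: "('v \<Rightarrow> 'v \<Rightarrow> bool) \<Rightarrow> ('v \<Rightarrow> 'v) set" where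
  "Aut E = {\<gamma>. bij \<gamma> \<and> (\<forall>x y. E x y \<longleftrightarrow> E (\<gamma> x) (\<gamma> y))}"

definition act_end :: "('v \<Rightarrow> 'v) \<Rightarrow> (nat \<Rightarrow> 'v) set \<Rightarrow> (nat \<Rightarrow> 'v) set" where
  "act_end \<gamma> \<omega> = (\<lambda>r. \<gamma> \<circ> r) ` \<omega>"

definition act_fa :: "('v \<Rightarrow> 'v \<Rightarrow> bool) \<Rightarrow> ('v \<Rightarrow> 'v) \<Rightarrow> ((nat \<Rightarrow> 'v) set set \<Rightarrow> complex)
     \<Rightarrow> (nat \<Rightarrow> 'v) set set \<Rightarrow> complex" where
  "act_fa E \<gamma> \<nu> A = \<nu> {\<omega> \<in> ends E. act_end \<gamma> \<omega> \<in> A}"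

definition pi_z :: "('v \<Rightarrow> 'v \<Rightarrow> bool) \<Rightarrow> 'v \<Rightarrow> complex \<Rightarrow> ('v \<Rightarrow> 'v)
     \<Rightarrow> ((nat \<Rightarrow> 'v) set set \<Rightarrow> complex) \<Rightarrow> (nat \<Rightarrow> 'v) set set \<Rightarrow> complex" where
  "pi_z E b z \<gamma> \<nu> A = fa_integral E A (\<lambda>\<omega>. z powi horo E \<omega> (\<gamma> b) b) (act_fa E \<gamma> \<nu>)"

end

theory Submission
  imports Defs
begin

fun wk :: "('v \<Rightarrow> 'v \<Rightarrow> bool) \<Rightarrow> 'v list \<Rightarrow> bool" where
  "wk E [] = False" | "wk E [x] = True" | "wk E (x#y#xs) = (E x y \<and> wk E (y#xs))"

lemma is_walk_single: "is_walk E [x]" by (simp add: is_walk_def)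

lemma is_walk_Cons2: "is_walk E (x#y#xs) \<longleftrightarrow> E x y \<and> is_walk E (y#xs)"
proof
  assume h: "is_walk E (x#y#xs)"
  have "Suc 0 < length (x#y#xs)" by simp
  then have "E ((x#y#xs) ! 0) ((x#y#xs) ! Suc 0)" using h unfolding is_walk_def by blast
  then have "E x y" by simp
  moreover have "is_walk E (y#xs)" unfolding is_walk_def
  proof (intro conjI allI impI)
    fix i assume "Suc i < length (y#xs)"
    then have "Suc (Suc i) < length (x#y#xs)" by simp
    then have "E ((x#y#xs) ! Suc i) ((x#y#xs) ! Suc (Suc i))" using h unfolding is_walk_def by blast
    then show "E ((y # xs) ! i) ((y # xs) ! Suc i)" by simp
  qed simp
  ultimately show "E x y \<and> is_walk E (y#xs)" by blast
next
  assume h: "E x y \<and> is_walk E (y#xs)"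
  show "is_walk E (x#y#xs)" unfolding is_walk_def
  proof (intro conjI allI impI)
    fix i assume i: "Suc i < length (x#y#xs)"
    show "E ((x#y#xs) ! i) ((x#y#xs) ! Suc i)"
    proof (cases i)
      case 0 then show ?thesis using h by simp
    next
      case (Suc j)
      then have "Suc j < length (y#xs)" using i by simp
      then have "E ((y#xs) ! j) ((y#xs) ! Suc j)" using h unfolding is_walk_def by blast
      then show ?thesis using Suc by simp
    qed
  qed simp
qed

lemma is_walk_wk: "is_walk E xs = wk E xs"
  by (induction E xs rule: wk.induct) (auto simp: is_walk_def[of _ "[]"] is_walk_single is_walk_Cons2)

lemma wk_nonempty: "wk E xs \<Longrightarrow> xs \<noteq> []" by auto

lemma wk_Cons: "wk E (x#xs) \<longleftrightarrow> xs = [] \<or> (E x (hd xs) \<and> wk E xs)"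
  by (cases xs) auto

lemma wk_append: "xs \<noteq> [] \<Longrightarrow> ys \<noteq> [] \<Longrightarrow>
   wk E (xs@ys) \<longleftrightarrow> wk E xs \<and> wk E ys \<and> E (last xs) (hd ys)"
proof (induction xs)
  case Nil then show ?case by simp
next
  case (Cons x xs)
  show ?case
  proof (cases "xs = []")
    case True then show ?thesis using Cons.prems by (auto simp add: wk_Cons)
  next
    case False
    have "wk E ((x#xs)@ys) \<longleftrightarrow> E x (hd xs) \<and> wk E (xs@ys)"
      using False by (simp add: wk_Cons[of E x "xs@ys"])
    also have "\<dots> \<longleftrightarrow> E x (hd xs) \<and> wk E xs \<and> wk E ys \<and> E (last xs) (hd ys)"
      using Cons.IH False Cons.prems by simp
    also have "\<dots> \<longleftrightarrow> wk E (x#xs) \<and> wk E ys \<and> E (last (x#xs)) (hd ys)"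
      using False by (simp add: wk_Cons[of E x xs])
    finally show ?thesis .
  qed
qed

lemma wk_rev: assumes "\<And>x y. E x y \<Longrightarrow> E y x" shows "wk E xs \<Longrightarrow> wk E (rev xs)"
proof (induction xs)
  case Nil then show ?case by simp
next
  case (Cons x xs)
  show ?case
  proof (cases "xs = []")
    case True then show ?thesis by simp
  next
    case False
    then have "E x (hd xs)" "wk E xs" using Cons.prems wk_Cons[of E x xs] by simp_all
    then have "wk E (rev xs)" using Cons.IH by blast
    moreover have "last (rev xs) = hd xs" using False by (simp add: last_rev)
    ultimately show ?thesis using False \<open>E x (hd xs)\<close> assms wk_append[of "rev xs" "[x]" E] by simp
  qed
qed

lemma wk_glue: "wk E (a@[w]) \<Longrightarrow> wk E (w#b) \<Longrightarrow> wk E (a@w#b)"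
proof (induction a)
  case Nil then show ?case by simp
next
  case (Cons x a)
  show ?case
  proof (cases a)
    case Nil then show ?thesis using Cons.prems by simp
  next
    case (Cons y a')
    then have "E x y" "wk E (a@[w])" using Cons.prems(1) by simp_all
    then have "wk E (a@w#b)" using Cons.IH Cons.prems(2) by simp
    then show ?thesis using \<open>E x y\<close> Cons by simp
  qed
qed

lemma wk_prefix: "wk E (a@b) \<Longrightarrow> a \<noteq> [] \<Longrightarrow> wk E a"
  by (cases "b = []") (simp_all add: wk_append)

lemma wk_suffix: "wk E (a@b) \<Longrightarrow> b \<noteq> [] \<Longrightarrow> wk E b"
  by (cases "a = []") (simp_all add: wk_append)

lemma wk_nth: "wk E xs \<Longrightarrow> Suc i < length xs \<Longrightarrow> E (xs!i) (xs!Suc i)"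
  using is_walk_wk[of E xs] unfolding is_walk_def by blast


locale tr =
  fixes E :: "'v \<Rightarrow> 'v \<Rightarrow> bool"
  assumes tree: "is_tree E"
begin

lemma Esym: "E x y \<Longrightarrow> E y x" using tree unfolding is_tree_def by blast
lemma Eirr: "\<not> E x x" using tree unfolding is_tree_def by blast
lemma conn: "\<exists>xs. wk E xs \<and> hd xs = x \<and> last xs = y"
  using tree unfolding is_tree_def is_walk_wk by blast
lemma nocyc: "3 \<le> length xs \<Longrightarrow> distinct xs \<Longrightarrow> wk E xs \<Longrightarrow> E (last xs) (hd xs) \<Longrightarrow> False"
  using tree unfolding is_tree_def is_walk_wk by blast

lemma distinct_hd_last: "distinct xs \<Longrightarrow> xs \<noteq> [] \<Longrightarrow> hd xs = last xs \<Longrightarrow> xs = [hd xs]"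
proof (cases xs)
  case (Cons a l)
  assume "distinct xs" "hd xs = last xs"
  then show ?thesis using Cons by (cases "l = []") auto
qed simp

lemma PU_aux:
  assumes "wk E xs" "wk E ys" "distinct xs" "distinct ys" "hd xs = hd ys" "last xs = last ys"
    and noint: "\<forall>w. w \<in> set xs \<longrightarrow> w \<in> set ys \<longrightarrow> w = hd xs \<or> w = last xs"
  shows "xs = ys"
proof (rule ccontr)
  assume ne: "xs \<noteq> ys"
  define x where "x = hd xs"
  define y where "y = last xs"
  have xsne: "xs \<noteq> []" "ys \<noteq> []" using assms(1,2) by auto
  have "x \<noteq> y"
  proof
    assume "x = y"
    have "xs = [hd xs]" using distinct_hd_last[of xs] xsne assms(3) \<open>x = y\<close> unfolding x_def y_def by blast
    moreover have "ys = [hd ys]" using distinct_hd_last[of ys] xsne assms(4,5,6) \<open>x = y\<close>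
      unfolding x_def y_def by simp
    ultimately have "xs = ys" using assms(5) by simp
    then show False using ne by simp
  qed
  obtain ys' where ys': "ys = x # ys'" using xsne assms(5) unfolding x_def by (cases ys) auto
  have "ys' \<noteq> []" using ys' assms(6) \<open>x \<noteq> y\<close> unfolding y_def by auto
  define m where "m = butlast ys'"
  have "ys' = butlast ys' @ [last ys']" using \<open>ys' \<noteq> []\<close> by simp
  moreover have "last ys' = y" using assms(6) ys' \<open>ys' \<noteq> []\<close> unfolding y_def by simp
  ultimately have m: "ys' = m @ [y]" unfolding m_def by simp
  have ysm: "ys = x # m @ [y]" using ys' m by simp
  show False
  proof (cases "m = []")
    case True
    then have "E x y" using assms(2) ysm by simp
    have "length xs \<noteq> 1" using \<open>x \<noteq> y\<close> xsne unfolding x_def y_def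
      by (cases xs) auto
    moreover have "length xs \<noteq> 2"
    proof
      assume "length xs = 2"
      then obtain a b where "xs = [a,b]"
        by (auto simp: numeral_2_eq_2 length_Suc_conv)
      then have "xs = [x,y]" unfolding x_def y_def by simp
      then show False using ne ysm True by simp
    qed
    moreover have "length xs \<noteq> 0" using xsne by simp
    ultimately have "3 \<le> length xs" by linarith
    then show False using nocyc[of xs] assms(1,3) Esym[OF \<open>E x y\<close>] unfolding x_def y_def by simp
  next
    case False
    define c where "c = xs @ rev m"
    have dm: "distinct m" using assms(4) ysm by simp
    have mxy: "x \<notin> set m" "y \<notin> set m" using assms(4) ysm by auto
    have disj: "set xs \<inter> set m = {}"
    proof -
      { fix w assume "w \<in> set xs" "w \<in> set m"
        then have "w \<in> set ys" using ysm by simp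
        then have "w = x \<or> w = y" using noint \<open>w \<in> set xs\<close> unfolding x_def y_def by blast
        then have False using mxy \<open>w \<in> set m\<close> by blast }
      then show ?thesis by blast
    qed
    have "distinct c" unfolding c_def using assms(3) dm disj by simp
    have wxm: "wk E (x # m)" using assms(2) ysm wk_prefix[of E "x#m" "[y]"] by simp
    have wm: "wk E m" using wxm False wk_Cons[of E x m] by simp
    have wmy: "wk E (m @ [y])" using assms(2) ysm wk_suffix[of E "[x]" "m@[y]"] by simp
    have e1: "E (last m) y" using wmy False wk_append[of m "[y]" E] by simp
    have e2: "E x (hd m)" using wxm False wk_Cons[of E x m] by simp
    have "wk E (rev m)" using wk_rev[OF _ wm] Esym by blast
    moreover have "hd (rev m) = last m" using False by (simp add: hd_rev)
    ultimately have "wk E c" unfolding c_def using assms(1) wk_append[of xs "rev m" E] False xsne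
        Esym[OF e1] unfolding y_def by simp
    moreover have "length xs \<ge> 2" using \<open>x \<noteq> y\<close> xsne unfolding x_def y_def by (cases xs) (auto split: if_splits simp: Suc_le_eq)
    then have "3 \<le> length c" unfolding c_def using False by (cases m) auto
    moreover have "last c = hd m" unfolding c_def using False by (simp add: last_rev)
    moreover have "hd c = x" unfolding c_def x_def using xsne by simp
    ultimately show False using nocyc[of c] \<open>distinct c\<close> Esym[OF e2] by simp
  qed
qed


lemma PU:
  "wk E xs \<Longrightarrow> wk E ys \<Longrightarrow> distinct xs \<Longrightarrow> distinct ys \<Longrightarrow> hd xs = hd ys \<Longrightarrow> last xs = last ys \<Longrightarrow> xs = ys"
proof (induction "length xs + length ys" arbitrary: xs ys rule: less_induct)
  case less
  show ?case
  proof (cases "\<exists>w. w \<in> set xs \<and> w \<in> set ys \<and> w \<noteq> hd xs \<and> w \<noteq> last xs")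
    case False
    then have "\<forall>w. w \<in> set xs \<longrightarrow> w \<in> set ys \<longrightarrow> w = hd xs \<or> w = last xs" by simp
    then show ?thesis by (rule PU_aux[OF less.prems])
  next
    case True
    then obtain w where w: "w \<in> set xs" "w \<in> set ys" "w \<noteq> hd xs" "w \<noteq> last xs" by blast
    obtain p s where ps: "xs = p @ w # s" using split_list[OF w(1)] by blast
    obtain p' s' where ps': "ys = p' @ w # s'" using split_list[OF w(2)] by blast
    have pne: "p \<noteq> []" proof assume "p = []" then show False using ps w(3) by simp qed
    have sne: "s \<noteq> []" proof assume "s = []" then show False using ps w(4) by simp qed
    have pne': "p' \<noteq> []" proof assume "p' = []" then show False using ps' w(3) less.prems(5) by simp qed
    have sne': "s' \<noteq> []" proof assume "s' = []" then show False using ps' w(4) less.prems(6) by simp qed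
    have a1: "wk E (p@[w])" using wk_prefix[of E "p@[w]" s] less.prems(1) ps by simp
    have a2: "wk E (p'@[w])" using wk_prefix[of E "p'@[w]" s'] less.prems(2) ps' by simp
    have b1: "wk E (w#s)" using wk_suffix[of E p "w#s"] less.prems(1) ps by simp
    have b2: "wk E (w#s')" using wk_suffix[of E p' "w#s'"] less.prems(2) ps' by simp
    have l1: "length (p@[w]) + length (p'@[w]) < length xs + length ys"
      using ps ps' sne sne' by simp
    have l2: "length (w#s) + length (w#s') < length xs + length ys"
      using ps ps' pne pne' by simp
    have dx: "distinct (p@[w])" "distinct (w#s)" using less.prems(3) unfolding ps by simp_all
    have dy: "distinct (p'@[w])" "distinct (w#s')" using less.prems(4) unfolding ps' by simp_all
    have "hd xs = hd p" "hd ys = hd p'" using ps ps' pne pne' by simp_all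
    then have h1: "hd (p@[w]) = hd (p'@[w])" using pne pne' less.prems(5) by simp
    have "last xs = last s" "last ys = last s'" using ps ps' sne sne' by simp_all
    then have h2: "last (w#s) = last (w#s')" using sne sne' less.prems(6) by simp
    have "p@[w] = p'@[w]" using less.hyps[OF l1 a1 a2 dx(1) dy(1) h1] by simp
    moreover have "w#s = w#s'" using less.hyps[OF l2 b1 b2 dx(2) dy(2) _ h2] by simp
    ultimately show ?thesis using ps ps' by simp
  qed
qed

end

context tr begin

lemma d_walk: "\<exists>xs. wk E xs \<and> hd xs = x \<and> last xs = y \<and> length xs = Suc (tdist E x y)"
proof -
  obtain xs where xs: "wk E xs" "hd xs = x" "last xs = y" using conn by blast
  then have "length xs = Suc (length xs - 1)" by (cases xs) auto
  then have ex: "\<exists>n xs. is_walk E xs \<and> hd xs = x \<and> last xs = y \<and> length xs = Suc n"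
    using xs is_walk_wk by blast
  show ?thesis using LeastI_ex[OF ex] unfolding tdist_def is_walk_wk by blast
qed

lemma d_le: "wk E xs \<Longrightarrow> tdist E (hd xs) (last xs) \<le> length xs - 1"
proof -
  assume w: "wk E xs"
  then have "length xs = Suc (length xs - 1)" by (cases xs) auto
  then have "is_walk E xs \<and> hd xs = hd xs \<and> last xs = last xs \<and> length xs = Suc (length xs - 1)"
    using w is_walk_wk by blast
  then show ?thesis unfolding tdist_def by (rule Least_le[where k = "length xs - 1", OF exI])
qed

lemma d_refl[simp]: "tdist E x x = 0"
  using d_le[of "[x]"] by simp

lemma d_zero: "tdist E x y = 0 \<Longrightarrow> x = y"
proof -
  assume "tdist E x y = 0"
  then obtain xs where "wk E xs" "hd xs = x" "last xs = y" "length xs = 1" using d_walk[of x y] by auto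
  then show ?thesis by (cases xs) auto
qed

lemma d_zero_iff: "tdist E x y = 0 \<longleftrightarrow> x = y" using d_zero by auto

lemma d_edge: "E x y \<Longrightarrow> tdist E x y = 1"
proof -
  assume e: "E x y"
  then have "wk E [x,y]" by simp
  then have "tdist E x y \<le> 1" using d_le[of "[x,y]"] by simp
  moreover have "x \<noteq> y" using e Eirr by blast
  then have "tdist E x y \<noteq> 0" using d_zero by blast
  ultimately show ?thesis by linarith
qed

lemma d_one: "tdist E x y = 1 \<Longrightarrow> E x y"
proof -
  assume "tdist E x y = 1"
  then obtain xs where xs: "wk E xs" "hd xs = x" "last xs = y" "length xs = 2" using d_walk[of x y] by auto
  then obtain a b where "xs = [a,b]" by (auto simp: numeral_2_eq_2 length_Suc_conv)
  then show ?thesis using xs by simp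
qed

lemma d_sym: "tdist E x y = tdist E y x"
proof -
  have le: "tdist E a b \<le> tdist E b a" for a b
  proof -
    obtain xs where xs: "wk E xs" "hd xs = b" "last xs = a" "length xs = Suc (tdist E b a)"
      using d_walk by blast
    have "wk E (rev xs)" using wk_rev[OF _ xs(1)] Esym by blast
    moreover have "xs \<noteq> []" using xs by auto
    ultimately show ?thesis using d_le[of "rev xs"] xs by (simp add: hd_rev last_rev)
  qed
  show ?thesis using le[of x y] le[of y x] by simp
qed

lemma d_tri: "tdist E x z \<le> tdist E x y + tdist E y z"
proof -
  obtain xs where xs: "wk E xs" "hd xs = x" "last xs = y" "length xs = Suc (tdist E x y)"
    using d_walk by blast
  obtain ys where ys: "wk E ys" "hd ys = y" "last ys = z" "length ys = Suc (tdist E y z)"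
    using d_walk by blast
  have xs': "xs = butlast xs @ [y]" using xs by (cases xs rule: rev_cases) auto
  have ys': "ys = y # tl ys" using ys by (cases ys) auto
  have "wk E (butlast xs @ y # tl ys)"
    using wk_glue[of E "butlast xs" y "tl ys"] xs(1) ys(1) xs' ys' by simp
  moreover have "hd (butlast xs @ y # tl ys) = x" using xs xs'
    by (cases "butlast xs") (simp_all add: hd_append)
  moreover have "last (butlast xs @ y # tl ys) = z" using ys ys'
    by (cases "tl ys") simp_all
  moreover have "length (butlast xs @ y # tl ys) = Suc (tdist E x y + tdist E y z)"
    using xs(4) ys(4) xs ys by simp
  ultimately show ?thesis using d_le[of "butlast xs @ y # tl ys"] by simp
qed

lemma d_nth: "wk E xs \<Longrightarrow> i \<le> j \<Longrightarrow> j < length xs \<Longrightarrow> tdist E (xs!i) (xs!j) \<le> j - i"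
proof (induction j)
  case 0 then show ?case by simp
next
  case (Suc j)
  show ?case
  proof (cases "i = Suc j")
    case True then show ?thesis by simp
  next
    case False
    then have "tdist E (xs!i) (xs!j) \<le> j - i" using Suc by simp
    moreover have "E (xs!j) (xs!Suc j)" using wk_nth Suc.prems by blast
    then have "tdist E (xs!j) (xs!Suc j) = 1" by (rule d_edge)
    ultimately show ?thesis using d_tri[of "xs!i" "xs!Suc j" "xs!j"] False Suc.prems by linarith
  qed
qed

lemma geo_distinct:
  assumes "wk E xs" "length xs = Suc (tdist E (hd xs) (last xs))"
  shows "distinct xs"
proof (rule ccontr)
  assume "\<not> distinct xs"
  then obtain p w q s where pq: "xs = p @ [w] @ q @ [w] @ s" using not_distinct_decomp by blast
  have a: "wk E (p@[w])" using wk_prefix[of E "p@[w]" "q @ [w] @ s"] assms(1) pq by simp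
  have b: "wk E (w#s)" using wk_suffix[of E "p @ [w] @ q" "w#s"] assms(1) pq by simp
  have c: "wk E (p@w#s)" using wk_glue[OF a b] .
  have "hd (p@w#s) = hd xs" using pq by (cases p) simp_all
  moreover have "last (p@w#s) = last xs" using pq by (cases s rule: rev_cases) simp_all
  ultimately have "tdist E (hd xs) (last xs) \<le> length (p@w#s) - 1" using d_le[OF c] by simp
  then show False using assms(2) pq by simp
qed

lemma geo_walk: "\<exists>xs. wk E xs \<and> hd xs = x \<and> last xs = y \<and> length xs = Suc (tdist E x y) \<and> distinct xs"
  using d_walk[of x y] geo_distinct by blast

lemma geo_nth_dist:
  assumes "wk E xs" "hd xs = x" "last xs = y" "length xs = Suc (tdist E x y)" "i < length xs"
  shows "tdist E x (xs!i) = i"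
proof -
  have h0: "xs!0 = x" using assms by (cases xs) auto
  have "xs \<noteq> []" using assms(1) by auto
  then have hl: "xs!(length xs - 1) = y" using assms(3) last_conv_nth[of xs] by simp
  have "tdist E x (xs!i) \<le> i" using d_nth[OF assms(1), of 0 i] assms(5) h0 by simp
  moreover have "tdist E (xs!i) y \<le> length xs - 1 - i" using d_nth[OF assms(1), of i "length xs - 1"] assms(5) hl by simp
  moreover have "tdist E x y \<le> tdist E x (xs!i) + tdist E (xs!i) y" by (rule d_tri)
  ultimately show ?thesis using assms(4,5) by linarith
qed

end

context tr begin

lemma wk_last_nth: "wk E p \<Longrightarrow> p ! (length p - 1) = last p"
  using last_conv_nth[of p] wk_nonempty[of E p] by simp

lemma geo_notin:
  assumes "wk E p" "hd p = x" "last p = u" "length p = Suc (tdist E x u)" "tdist E x u < tdist E x v"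
  shows "v \<notin> set p"
proof
  assume "v \<in> set p"
  then obtain i where i: "i < length p" "p!i = v" by (auto simp: in_set_conv_nth)
  then have "tdist E x v = i" using geo_nth_dist[OF assms(1-4) i(1)] by simp
  then show False using assms(4,5) i(1) by simp
qed

lemma geo_snoc:
  assumes "wk E p" "hd p = x" "last p = u" "length p = Suc (tdist E x u)" "distinct p"
    "v \<notin> set p" "E u v"
  shows "wk E (p@[v])" "distinct (p@[v])" "hd (p@[v]) = x" "last (p@[v]) = v"
proof -
  have pne: "p \<noteq> []" using assms(1) by auto
  show "wk E (p@[v])" using wk_append[OF pne, of "[v]" E] assms by simp
  show "distinct (p@[v])" using assms by simp
  show "hd (p@[v]) = x" using assms pne by simp
  show "last (p@[v]) = v" by simp
qed

lemma d_adj: "E u v \<Longrightarrow> tdist E x v = tdist E x u + 1 \<or> tdist E x u = tdist E x v + 1"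
proof -
  assume e: "E u v"
  have de: "tdist E u v = 1" "tdist E v u = 1" using d_edge e Esym by auto
  have a: "tdist E x v \<le> tdist E x u + 1" using d_tri[of x v u] de by simp
  have b: "tdist E x u \<le> tdist E x v + 1" using d_tri[of x u v] de by simp
  have "tdist E x u \<noteq> tdist E x v"
  proof
    assume eq: "tdist E x u = tdist E x v"
    obtain p where p: "wk E p" "hd p = x" "last p = u" "length p = Suc (tdist E x u)" "distinct p"
      using geo_walk by blast
    obtain q where q: "wk E q" "hd q = x" "last q = v" "length q = Suc (tdist E x v)" "distinct q"
      using geo_walk by blast
    have "v \<notin> set p"
    proof
      assume "v \<in> set p"
      then obtain i where i: "i < length p" "p!i = v" by (auto simp: in_set_conv_nth)
      then have "tdist E x v = i" using geo_nth_dist[OF p(1-4) i(1)] by simp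
      then have "i = length p - 1" using eq p(4) by simp
      then have "v = u" using i p(3) wk_last_nth[OF p(1)] by simp
      then show False using e Eirr by blast
    qed
    note s = geo_snoc[OF p \<open>v \<notin> set p\<close> e]
    have "p@[v] = q" using PU[OF s(1) q(1) s(2) q(5)] s(3,4) q(2,3) by simp
    then show False using p(4) q(4) eq by auto
  qed
  then show ?thesis using a b by linarith
qed

lemma par_uniq:
  assumes "E u1 v" "E u2 v" "tdist E x u1 + 1 = tdist E x v" "tdist E x u2 + 1 = tdist E x v"
  shows "u1 = u2"
proof -
  obtain p where p: "wk E p" "hd p = x" "last p = u1" "length p = Suc (tdist E x u1)" "distinct p"
    using geo_walk by blast
  obtain q where q: "wk E q" "hd q = x" "last q = u2" "length q = Suc (tdist E x u2)" "distinct q"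
    using geo_walk by blast
  have "v \<notin> set p" using geo_notin[OF p(1-4)] assms by simp
  have "v \<notin> set q" using geo_notin[OF q(1-4)] assms by simp
  note s1 = geo_snoc[OF p \<open>v \<notin> set p\<close> assms(1)]
  note s2 = geo_snoc[OF q \<open>v \<notin> set q\<close> assms(2)]
  have "p@[v] = q@[v]" using PU[OF s1(1) s2(1) s1(2) s2(2)] s1(3,4) s2(3,4) by simp
  then have "p = q" by simp
  then show ?thesis using p(3) q(3) by simp
qed

lemma par_ex: "v \<noteq> x \<Longrightarrow> \<exists>u. E u v \<and> tdist E x u + 1 = tdist E x v"
proof -
  assume ne: "v \<noteq> x"
  obtain p where p: "wk E p" "hd p = x" "last p = v" "length p = Suc (tdist E x v)" "distinct p"
    using geo_walk by blast
  define k where "k = tdist E x v"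
  have "k \<noteq> 0" using ne d_zero unfolding k_def by metis
  have "p ! k = v" using p(3,4) wk_last_nth[OF p(1)] unfolding k_def by simp
  moreover have "E (p!(k-1)) (p!Suc (k-1))" using wk_nth[OF p(1), of "k-1"] p(4) \<open>k \<noteq> 0\<close> unfolding k_def by simp
  moreover have "Suc (k-1) = k" using \<open>k \<noteq> 0\<close> by simp
  moreover have "tdist E x (p!(k-1)) = k - 1" using geo_nth_dist[OF p(1-4)] p(4) unfolding k_def by simp
  ultimately have "E (p!(k-1)) v \<and> tdist E x (p!(k-1)) + 1 = tdist E x v"
    using \<open>k \<noteq> 0\<close> unfolding k_def by simp
  then show ?thesis by blast
qed

lemma d_edge_cases: "E u v \<Longrightarrow> tdist E x u \<noteq> tdist E x v"
proof -
  assume "E u v"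
  from d_adj[OF this, of x] show ?thesis by linarith
qed

end

definition nbt :: "('v \<Rightarrow> 'v \<Rightarrow> bool) \<Rightarrow> (nat \<Rightarrow> 'v) \<Rightarrow> bool" where
  "nbt E r \<longleftrightarrow> (\<forall>i. E (r i) (r (Suc i))) \<and> (\<forall>i. r i \<noteq> r (Suc (Suc i)))"

context tr begin

lemma nbt_seg:
  assumes e: "\<And>i. i < n \<Longrightarrow> E (f i) (f (Suc i))"
    and nb: "\<And>i. Suc (Suc i) \<le> n \<Longrightarrow> f i \<noteq> f (Suc (Suc i))"
  shows "j \<le> n \<Longrightarrow> tdist E (f 0) (f j) = j"
proof (induction j rule: less_induct)
  case (less j)
  show ?case
  proof (cases j)
    case 0 then show ?thesis by simp
  next
    case (Suc k)
    show ?thesis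
    proof (cases k)
      case 0
      then show ?thesis using Suc e[of 0] less.prems d_edge by simp
    next
      case (Suc l)
      have IH1: "tdist E (f 0) (f k) = k" using less.IH less.prems \<open>j = Suc k\<close> by simp
      have IH2: "tdist E (f 0) (f l) = l" using less.IH less.prems \<open>j = Suc k\<close> Suc by simp
      have ek: "E (f k) (f j)" using e[of k] less.prems \<open>j = Suc k\<close> by simp
      have el: "E (f l) (f k)" using e[of l] less.prems \<open>j = Suc k\<close> Suc by simp
      have ne: "f l \<noteq> f j" using nb[of l] less.prems \<open>j = Suc k\<close> Suc by simp
      from d_adj[OF ek, of "f 0"] show ?thesis
      proof
        assume "tdist E (f 0) (f j) = tdist E (f 0) (f k) + 1"
        then show ?thesis using IH1 \<open>j = Suc k\<close> by simp
      next
        assume h: "tdist E (f 0) (f k) = tdist E (f 0) (f j) + 1"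
        have "f l = f j" using par_uniq[OF el Esym[OF ek], of "f 0"] IH1 IH2 h Suc by simp
        then show ?thesis using ne by blast
      qed
    qed
  qed
qed

lemma nbt_geod: "nbt E r \<Longrightarrow> geod_ray E r"
proof -
  assume h: "nbt E r"
  have a: "tdist E (r m) (r (m + j)) = j" for m j
  proof -
    have "tdist E ((\<lambda>i. r (m + i)) 0) ((\<lambda>i. r (m + i)) j) = j"
      by (rule nbt_seg[of j]) (use h in \<open>auto simp: nbt_def\<close>)
    then show ?thesis by simp
  qed
  show ?thesis unfolding geod_ray_def
  proof (intro allI)
    fix m n
    show "tdist E (r m) (r n) = (if m \<le> n then n - m else m - n)"
    proof (cases "m \<le> n")
      case True then show ?thesis using a[of m "n - m"] by simp
    next
      case False then show ?thesis using a[of n "m - n"] d_sym[of "r m" "r n"] by simp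
    qed
  qed
qed

lemma geod_dist: "geod_ray E r \<Longrightarrow> tdist E (r m) (r (m + j)) = j"
  unfolding geod_ray_def by simp

lemma geod_d0: "geod_ray E r \<Longrightarrow> tdist E (r 0) (r j) = j"
  using geod_dist[of r 0 j] by simp

lemma geod_E: "geod_ray E r \<Longrightarrow> E (r i) (r (Suc i))"
  using geod_dist[of r i 1] d_one by simp

lemma geod_nbt: "geod_ray E r \<Longrightarrow> nbt E r"
proof -
  assume g: "geod_ray E r"
  have "r i \<noteq> r (Suc (Suc i))" for i
    using geod_dist[OF g, of i 2] by auto
  then show ?thesis unfolding nbt_def using geod_E[OF g] by blast
qed

lemma geod_inj: "geod_ray E r \<Longrightarrow> r m = r n \<Longrightarrow> m = n"
proof -
  assume g: "geod_ray E r" and eq: "r m = r n"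
  have "tdist E (r m) (r n) = (if m \<le> n then n - m else m - n)" using g unfolding geod_ray_def by blast
  then show "m = n" using eq by (simp split: if_splits)
qed

lemma geod_shift: "geod_ray E r \<Longrightarrow> geod_ray E (\<lambda>i. r (k + i))"
  unfolding geod_ray_def by simp

lemma seg_uniq:
  assumes "f 0 = g 0" "f n = g n"
    and df: "\<And>i. i \<le> n \<Longrightarrow> tdist E (f 0) (f i) = i"
    and dg: "\<And>i. i \<le> n \<Longrightarrow> tdist E (g 0) (g i) = i"
    and ef: "\<And>i. i < n \<Longrightarrow> E (f i) (f (Suc i))"
    and eg: "\<And>i. i < n \<Longrightarrow> E (g i) (g (Suc i))"
  shows "i \<le> n \<Longrightarrow> f i = g i"
proof -
  have all: "\<forall>k \<le> n. f (n - k) = g (n - k)"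
  proof (intro allI)
    fix k show "k \<le> n \<longrightarrow> f (n - k) = g (n - k)"
    proof (induction k)
      case 0 then show ?case using assms(2) by simp
    next
      case (Suc k)
      show ?case
      proof
        assume k: "Suc k \<le> n"
        define v where "v = n - k"
        have v: "v = Suc (n - Suc k)" using k unfolding v_def by simp
        have fv: "f v = g v" using Suc k unfolding v_def by simp
        have "E (f (n - Suc k)) (f v)" using ef[of "n - Suc k"] v k by simp
        moreover have "E (g (n - Suc k)) (f v)" using eg[of "n - Suc k"] v k fv by simp
        moreover have "tdist E (f 0) (f (n - Suc k)) + 1 = tdist E (f 0) (f v)"
          using df[of "n - Suc k"] df[of v] v k unfolding v_def by simp
        moreover have "tdist E (f 0) (g (n - Suc k)) + 1 = tdist E (f 0) (f v)"
          using dg[of "n - Suc k"] dg[of v] v k fv assms(1) unfolding v_def by simp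
        ultimately show "f (n - Suc k) = g (n - Suc k)" by (rule par_uniq)
      qed
    qed
  qed
  assume "i \<le> n"
  have "f (n - (n - i)) = g (n - (n - i))" using all[rule_format, of "n - i"] by simp
  then show "f i = g i" using \<open>i \<le> n\<close> by simp
qed

lemma geod_prefix_eq:
  assumes "geod_ray E r" "geod_ray E s" "r 0 = s 0" "r n = s n" "i \<le> n"
  shows "r i = s i"
  using seg_uniq[of r s n, OF assms(3,4) _ _ _ _ assms(5)] geod_d0[OF assms(1)] geod_d0[OF assms(2)]
    geod_E[OF assms(1)] geod_E[OF assms(2)] by blast

lemma geod_same_vertex:
  assumes "geod_ray E r" "geod_ray E s" "r 0 = s 0" "r n = s m"
  shows "n = m"
  using geod_d0[OF assms(1), of n] geod_d0[OF assms(2), of m] assms(3,4) by simp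

end

definition coinc :: "(nat \<Rightarrow> 'v) \<Rightarrow> (nat \<Rightarrow> 'v) \<Rightarrow> bool" where
  "coinc r s \<longleftrightarrow> (\<exists>a b. \<forall>j. r (a + j) = s (b + j))"

lemma coinc_refl: "coinc r r" unfolding coinc_def by blast
lemma coinc_sym: "coinc r s \<Longrightarrow> coinc s r"
proof -
  assume "coinc r s"
  then obtain a b where "\<And>j. r (a + j) = s (b + j)" unfolding coinc_def by blast
  then have "\<forall>j. s (b + j) = r (a + j)" by simp
  then show ?thesis unfolding coinc_def by blast
qed
lemma coinc_trans: "coinc r s \<Longrightarrow> coinc s t \<Longrightarrow> coinc r t"
proof -
  assume "coinc r s" "coinc s t"
  then obtain a b c d where h1: "\<And>j. r (a + j) = s (b + j)" and h2: "\<And>j. s (c + j) = t (d + j)"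
    unfolding coinc_def by blast
  have "r ((a + c) + j) = t ((d + b) + j)" for j
  proof -
    have "r ((a + c) + j) = s (b + (c + j))" using h1[of "c + j"] by (simp add: add.assoc)
    also have "\<dots> = s (c + (b + j))" by (simp add: add.commute add.left_commute)
    also have "\<dots> = t (d + (b + j))" using h2 by simp
    finally show ?thesis by (simp add: add.assoc)
  qed
  then show ?thesis unfolding coinc_def by blast
qed

lemma coinc_shift: "coinc r s \<Longrightarrow> coinc (\<lambda>i. r (k + i)) s"
proof -
  assume "coinc r s"
  then obtain a b where h: "\<And>j. r (a + j) = s (b + j)" unfolding coinc_def by blast
  have "r (k + (a + j)) = s ((b + k) + j)" for j using h[of "k + j"] by (simp add: ac_simps)
  then show ?thesis unfolding coinc_def by blast
qed

context tr begin

lemma edges_tail_finite: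
  "ray_edges r \<subseteq> ray_edges (\<lambda>i. r (k + i)) \<union> (\<lambda>n. {r n, r (Suc n)}) ` {..<k}"
proof
  fix e assume "e \<in> ray_edges r"
  then obtain n where n: "e = {r n, r (Suc n)}" unfolding ray_edges_def by blast
  show "e \<in> ray_edges (\<lambda>i. r (k + i)) \<union> (\<lambda>n. {r n, r (Suc n)}) ` {..<k}"
  proof (cases "n < k")
    case True then show ?thesis using n by blast
  next
    case False
    then have "e = {r (k + (n - k)), r (k + Suc (n - k))}" using n by simp
    then show ?thesis unfolding ray_edges_def by blast
  qed
qed

lemma shared_tails:
  assumes "infinite (ray_edges r \<inter> ray_edges s)"
  shows "infinite (ray_edges (\<lambda>i. r (a + i)) \<inter> ray_edges (\<lambda>i. s (b + i)))"
proof
  assume fin: "finite (ray_edges (\<lambda>i. r (a + i)) \<inter> ray_edges (\<lambda>i. s (b + i)))"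
  have "ray_edges r \<inter> ray_edges s \<subseteq> (ray_edges (\<lambda>i. r (a + i)) \<inter> ray_edges (\<lambda>i. s (b + i)))
      \<union> (\<lambda>n. {r n, r (Suc n)}) ` {..<a} \<union> (\<lambda>n. {s n, s (Suc n)}) ` {..<b}"
    using edges_tail_finite[of r a] edges_tail_finite[of s b] by blast
  moreover have "finite \<dots>" using fin by simp
  ultimately show False using assms finite_subset by blast
qed

lemma RU:
  assumes gr: "geod_ray E r" and gs: "geod_ray E s" and h0: "r 0 = s 0"
    and inf: "infinite (ray_edges r \<inter> ray_edges s)"
  shows "r = s"
proof
  fix N
  define F where "F = (\<lambda>n. {r n, r (Suc n)}) ` {..<Suc N}"
  have "finite F" unfolding F_def by simp
  then have "infinite ((ray_edges r \<inter> ray_edges s) - F)" using inf by simp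
  then have "(ray_edges r \<inter> ray_edges s) - F \<noteq> {}" by (intro notI) simp
  then obtain e where e: "e \<in> ray_edges r" "e \<in> ray_edges s" "e \<notin> F" by blast
  obtain n where n: "e = {r n, r (Suc n)}" using e(1) unfolding ray_edges_def by blast
  obtain m where m: "e = {s m, s (Suc m)}" using e(2) unfolding ray_edges_def by blast
  have "N \<le> n"
  proof (rule ccontr)
    assume "\<not> N \<le> n" then have "n \<in> {..<Suc N}" by simp
    then show False using e(3) n unfolding F_def by blast
  qed
  have "{r n, r (Suc n)} = {s m, s (Suc m)}" using n m by simp
  then have "(r n = s m \<and> r (Suc n) = s (Suc m)) \<or> (r n = s (Suc m) \<and> r (Suc n) = s m)"
    by (simp only: doubleton_eq_iff)
  then show "r N = s N"
  proof
    assume "r n = s m \<and> r (Suc n) = s (Suc m)"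
    then have "r n = s n" using geod_same_vertex[OF gr gs h0, of n m] by simp
    then show ?thesis using geod_prefix_eq[OF gr gs h0] \<open>N \<le> n\<close> by blast
  next
    assume h: "r n = s (Suc m) \<and> r (Suc n) = s m"
    then have "n = Suc m" "Suc n = m" using geod_same_vertex[OF gr gs h0] by auto
    then show ?thesis by simp
  qed
qed

lemma coinc_shared:
  assumes gr: "geod_ray E r" and c: "\<And>j. r (a + j) = s (b + j)"
  shows "infinite (ray_edges r \<inter> ray_edges s)"
proof -
  define f where "f = (\<lambda>j. {r (a + j), r (Suc (a + j))})"
  have "inj f"
  proof
    fix i j assume "f i = f j"
    then have "(r (a + i) = r (a + j) \<and> r (Suc (a + i)) = r (Suc (a + j))) \<or>
               (r (a + i) = r (Suc (a + j)) \<and> r (Suc (a + i)) = r (a + j))"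
      unfolding f_def by (simp only: doubleton_eq_iff)
    then show "i = j"
    proof
      assume "r (a + i) = r (a + j) \<and> r (Suc (a + i)) = r (Suc (a + j))"
      then show "i = j" using geod_inj[OF gr, of "a + i" "a + j"] by simp
    next
      assume h: "r (a + i) = r (Suc (a + j)) \<and> r (Suc (a + i)) = r (a + j)"
      then have "a + i = Suc (a + j)" "Suc (a + i) = a + j" using geod_inj[OF gr] by blast+
      then show "i = j" by simp
    qed
  qed
  then have "infinite (range f)" by (rule range_inj_infinite)
  moreover have "range f \<subseteq> ray_edges r \<inter> ray_edges s"
  proof
    fix e assume "e \<in> range f"
    then obtain j where j: "e = f j" by blast
    have "e = {s (b + j), s (Suc (b + j))}" using j c[of j] c[of "Suc j"] unfolding f_def by simp
    then show "e \<in> ray_edges r \<inter> ray_edges s" using j unfolding f_def ray_edges_def by blast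
  qed
  ultimately show ?thesis using finite_subset by blast
qed

lemma merge:
  assumes gr: "geod_ray E r" and gs: "geod_ray E s" and inf: "infinite (ray_edges r \<inter> ray_edges s)"
  shows "coinc r s"
proof -
  have "ray_edges r \<inter> ray_edges s \<noteq> {}" using inf by (intro notI) simp
  then obtain e where e: "e \<in> ray_edges r" "e \<in> ray_edges s" by blast
  obtain n where n: "e = {r n, r (Suc n)}" using e(1) unfolding ray_edges_def by blast
  obtain m where m: "e = {s m, s (Suc m)}" using e(2) unfolding ray_edges_def by blast
  have "{r n, r (Suc n)} = {s m, s (Suc m)}" using n m by simp
  then have "(r n = s m \<and> r (Suc n) = s (Suc m)) \<or> (r n = s (Suc m) \<and> r (Suc n) = s m)"
    by (simp only: doubleton_eq_iff)
  then show ?thesis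
  proof
    assume h: "r n = s m \<and> r (Suc n) = s (Suc m)"
    have "(\<lambda>i. r (n + i)) = (\<lambda>i. s (m + i))"
      by (rule RU[OF geod_shift[OF gr] geod_shift[OF gs]]) (use h shared_tails[OF inf] in simp_all)
    then have "\<forall>j. r (n + j) = s (m + j)" by (simp add: fun_eq_iff)
    then show ?thesis unfolding coinc_def by blast
  next
    assume h: "r n = s (Suc m) \<and> r (Suc n) = s m"
    have "(\<lambda>i. r (Suc n + i)) = (\<lambda>i. s (m + i))"
      by (rule RU[OF geod_shift[OF gr] geod_shift[OF gs]]) (use h shared_tails[OF inf, of "Suc n" m] in simp_all)
    then have "r (Suc n + 1) = s (m + 1)" by (rule fun_cong)
    then have "r (Suc (Suc n)) = r n" using h by simp
    then have "Suc (Suc n) = n" using geod_inj[OF gr] by blast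
    then show ?thesis by simp
  qed
qed

lemma ray_equiv_iff: "(r, s) \<in> ray_equiv E \<longleftrightarrow> geod_ray E r \<and> geod_ray E s \<and> coinc r s"
proof
  assume "(r, s) \<in> ray_equiv E"
  then show "geod_ray E r \<and> geod_ray E s \<and> coinc r s" unfolding ray_equiv_def using merge by blast
next
  assume h: "geod_ray E r \<and> geod_ray E s \<and> coinc r s"
  then obtain a b where "\<And>j. r (a + j) = s (b + j)" unfolding coinc_def by blast
  then show "(r, s) \<in> ray_equiv E" unfolding ray_equiv_def using coinc_shared h by blast
qed


lemma class_eq: "geod_ray E r \<Longrightarrow> ray_equiv E `` {r} = {s. geod_ray E s \<and> coinc r s}"
  by (auto simp: ray_equiv_iff)

lemma ends_iff: "\<omega> \<in> ends E \<longleftrightarrow> (\<exists>r. geod_ray E r \<and> \<omega> = {s. geod_ray E s \<and> coinc r s})"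
proof
  assume "\<omega> \<in> ends E"
  then obtain r where "geod_ray E r" "\<omega> = ray_equiv E `` {r}"
    unfolding ends_def by (auto elim!: quotientE)
  then show "\<exists>r. geod_ray E r \<and> \<omega> = {s. geod_ray E s \<and> coinc r s}" using class_eq by blast
next
  assume "\<exists>r. geod_ray E r \<and> \<omega> = {s. geod_ray E s \<and> coinc r s}"
  then obtain r where r: "geod_ray E r" "\<omega> = {s. geod_ray E s \<and> coinc r s}" by blast
  then have "\<omega> = ray_equiv E `` {r}" using class_eq by blast
  then show "\<omega> \<in> ends E" unfolding ends_def using r(1) quotientI[of r] by blast
qed

lemma ends_obtain:
  assumes "\<omega> \<in> ends E"
  obtains r where "geod_ray E r" "\<omega> = {s. geod_ray E s \<and> coinc r s}"
  using assms ends_iff by blast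

lemma ends_mem: "\<omega> \<in> ends E \<Longrightarrow> r \<in> \<omega> \<Longrightarrow> geod_ray E r"
  by (erule ends_obtain) blast

lemma ends_coinc: "\<omega> \<in> ends E \<Longrightarrow> r \<in> \<omega> \<Longrightarrow> s \<in> \<omega> \<Longrightarrow> coinc r s"
proof -
  assume a: "\<omega> \<in> ends E" "r \<in> \<omega>" "s \<in> \<omega>"
  obtain r0 where r0: "geod_ray E r0" "\<omega> = {s. geod_ray E s \<and> coinc r0 s}" using a(1) by (rule ends_obtain)
  have "coinc r0 r" "coinc r0 s" using a r0 by blast+
  then show ?thesis using coinc_sym coinc_trans by blast
qed

lemma ends_closed: "\<omega> \<in> ends E \<Longrightarrow> r \<in> \<omega> \<Longrightarrow> geod_ray E s \<Longrightarrow> coinc r s \<Longrightarrow> s \<in> \<omega>"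
proof -
  assume a: "\<omega> \<in> ends E" "r \<in> \<omega>" "geod_ray E s" "coinc r s"
  obtain r0 where r0: "geod_ray E r0" "\<omega> = {s. geod_ray E s \<and> coinc r0 s}" using a(1) by (rule ends_obtain)
  have "coinc r0 r" using a r0 by blast
  then have "coinc r0 s" using a(4) coinc_trans by blast
  then show ?thesis using r0 a(3) by blast
qed

lemma ends_uniq: "\<omega> \<in> ends E \<Longrightarrow> r \<in> \<omega> \<Longrightarrow> s \<in> \<omega> \<Longrightarrow> r 0 = s 0 \<Longrightarrow> r = s"
proof -
  assume a: "\<omega> \<in> ends E" "r \<in> \<omega>" "s \<in> \<omega>" "r 0 = s 0"
  have gr: "geod_ray E r" and gs: "geod_ray E s" using a ends_mem by blast+
  obtain p q where "\<And>j. r (p + j) = s (q + j)" using ends_coinc[OF a(1-3)] unfolding coinc_def by blast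
  then have "infinite (ray_edges r \<inter> ray_edges s)" using coinc_shared[OF gr] by blast
  then show "r = s" using RU[OF gr gs a(4)] by blast
qed

lemma ends_nonempty: "\<omega> \<in> ends E \<Longrightarrow> \<exists>r. r \<in> \<omega>"
  by (erule ends_obtain) (use coinc_refl in blast)

end

context tr begin

lemma RE: assumes om: "\<omega> \<in> ends E" shows "\<exists>s\<in>\<omega>. s 0 = x"
proof -
  obtain r where r: "r \<in> \<omega>" using ends_nonempty[OF om] by blast
  have gr: "geod_ray E r" using ends_mem[OF om r] .
  obtain k where k: "\<And>k'. tdist E x (r k) \<le> tdist E x (r k')"
    using ex_has_least_nat[of "\<lambda>_. True" 0 "\<lambda>k. tdist E x (r k)"] by blast
  define D where "D = tdist E x (r k)"
  obtain p where p: "wk E p" "hd p = x" "last p = r k" "length p = Suc D" "distinct p"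
    using geo_walk[of x "r k"] unfolding D_def by blast
  have pd: "i \<le> D \<Longrightarrow> tdist E x (p!i) = i" for i
    using geo_nth_dist[OF p(1-3)] p(4) unfolding D_def by simp
  have p0: "p!0 = x" using p(1,2) by (cases p) auto
  have pD: "p!D = r k" using wk_last_nth[OF p(1)] p(3,4) by simp
  have pe: "i < D \<Longrightarrow> E (p!i) (p!Suc i)" for i using wk_nth[OF p(1)] p(4) by simp
  define s where "s = (\<lambda>i. if i \<le> D then p!i else r (k + (i - D)))"
  have sE: "E (s i) (s (Suc i))" for i
  proof -
    consider "i < D" | "i = D" | "D < i" by linarith
    then show ?thesis
    proof cases
      case 1 then show ?thesis using pe[of i] unfolding s_def by simp
    next
      case 2 then show ?thesis using geod_E[OF gr, of k] pD unfolding s_def by simp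
    next
      case 3
      then have "Suc i - D = Suc (i - D)" by simp
      then show ?thesis using geod_E[OF gr, of "k + (i - D)"] 3 unfolding s_def by simp
    qed
  qed
  have sN: "s i \<noteq> s (Suc (Suc i))" for i
  proof -
    consider "Suc (Suc i) \<le> D" | "Suc i = D" | "D \<le> i" by linarith
    then show ?thesis
    proof cases
      case 1
      then have "tdist E x (s i) = i" "tdist E x (s (Suc (Suc i))) = Suc (Suc i)"
        using pd[of i] pd[of "Suc (Suc i)"] unfolding s_def by simp_all
      then show ?thesis by auto
    next
      case 2
      then have "tdist E x (s i) = i" using pd[of i] unfolding s_def by simp
      moreover have "s (Suc (Suc i)) = r (k + 1)" using 2 unfolding s_def by simp
      moreover have "D \<le> tdist E x (r (k + 1))" using k unfolding D_def by blast
      ultimately show ?thesis using 2 by auto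
    next
      case 3
      have "s i = r (k + (i - D))" "s (Suc (Suc i)) = r (k + (Suc (Suc i) - D))"
        using 3 pD unfolding s_def by auto
      moreover have "k + (i - D) \<noteq> k + (Suc (Suc i) - D)" using 3 by simp
      ultimately show ?thesis using geod_inj[OF gr] by metis
    qed
  qed
  have gs: "geod_ray E s" using nbt_geod sE sN unfolding nbt_def by blast
  have "r (k + j) = s (D + j)" for j using pD unfolding s_def by (cases j) auto
  then have "coinc r s" unfolding coinc_def by blast
  then have "s \<in> \<omega>" using ends_closed[OF om r gs] by blast
  moreover have "s 0 = x" using p0 unfolding s_def by simp
  ultimately show ?thesis by blast
qed

lemma RT_ex1: "\<omega> \<in> ends E \<Longrightarrow> \<exists>!r. r \<in> \<omega> \<and> r 0 = x"
  using RE ends_uniq by blast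

lemma RT_in: "\<omega> \<in> ends E \<Longrightarrow> ray_to E x \<omega> \<in> \<omega>"
  unfolding ray_to_def using theI'[OF RT_ex1] by blast

lemma RT_0[simp]: "\<omega> \<in> ends E \<Longrightarrow> ray_to E x \<omega> 0 = x"
  unfolding ray_to_def using theI'[OF RT_ex1] by blast

lemma RT_uniq: "\<omega> \<in> ends E \<Longrightarrow> r \<in> \<omega> \<Longrightarrow> r 0 = x \<Longrightarrow> ray_to E x \<omega> = r"
  unfolding ray_to_def using the1_equality[OF RT_ex1] by blast

lemma RT_geod: "\<omega> \<in> ends E \<Longrightarrow> geod_ray E (ray_to E x \<omega>)"
  using RT_in ends_mem by blast

lemma RT_tail:
  assumes om: "\<omega> \<in> ends E"
  shows "ray_to E (ray_to E x \<omega> k) \<omega> = (\<lambda>i. ray_to E x \<omega> (k + i))"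
proof (rule RT_uniq[OF om])
  let ?r = "ray_to E x \<omega>"
  have "\<forall>j. ?r (k + j) = (\<lambda>i. ?r (k + i)) (0 + j)" by simp
  then have "coinc ?r (\<lambda>i. ?r (k + i))" unfolding coinc_def by blast
  then show "(\<lambda>i. ?r (k + i)) \<in> \<omega>" using ends_closed[OF om RT_in[OF om] geod_shift[OF RT_geod[OF om]]] by blast
qed simp

end

context tr begin

lemma concat_ray:
  assumes p: "wk E p" "hd p = y" "last p = a" "length p = Suc D" and D: "D = tdist E y a"
    and gt: "geod_ray E t" "t 0 = a" and far: "D \<le> tdist E y (t 1)"
    and s_def: "s = (\<lambda>i. if i \<le> D then p!i else t (i - D))"
  shows "geod_ray E s" "s 0 = y" "\<And>j. s (D + j) = t j"
proof -
  have pd: "i \<le> D \<Longrightarrow> tdist E y (p!i) = i" for i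
    using geo_nth_dist[OF p(1-3)] p(4) D by simp
  have p0: "p!0 = y" using p(1,2) by (cases p) auto
  have pD: "p!D = a" using wk_last_nth[OF p(1)] p(3,4) by simp
  have pe: "i < D \<Longrightarrow> E (p!i) (p!Suc i)" for i using wk_nth[OF p(1)] p(4) by simp
  have sE: "E (s i) (s (Suc i))" for i
  proof -
    consider "i < D" | "i = D" | "D < i" by linarith
    then show ?thesis
    proof cases
      case 1 then show ?thesis using pe[of i] unfolding s_def by simp
    next
      case 2 then show ?thesis using geod_E[OF gt(1), of 0] pD gt(2) unfolding s_def by simp
    next
      case 3
      then have "Suc i - D = Suc (i - D)" by simp
      then show ?thesis using geod_E[OF gt(1), of "i - D"] 3 unfolding s_def by simp
    qed
  qed
  have sN: "s i \<noteq> s (Suc (Suc i))" for i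
  proof -
    consider "Suc (Suc i) \<le> D" | "Suc i = D" | "D \<le> i" by linarith
    then show ?thesis
    proof cases
      case 1
      then have "tdist E y (s i) = i" "tdist E y (s (Suc (Suc i))) = Suc (Suc i)"
        using pd[of i] pd[of "Suc (Suc i)"] unfolding s_def by simp_all
      then show ?thesis by auto
    next
      case 2
      then have "tdist E y (s i) = i" using pd[of i] unfolding s_def by simp
      moreover have "s (Suc (Suc i)) = t 1" using 2 unfolding s_def by simp
      ultimately show ?thesis using 2 far by auto
    next
      case 3
      have "s i = t (i - D)" "s (Suc (Suc i)) = t (Suc (Suc i) - D)"
        using 3 pD gt(2) unfolding s_def by auto
      moreover have "i - D \<noteq> Suc (Suc i) - D" using 3 by simp
      ultimately show ?thesis using geod_inj[OF gt(1)] by metis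
    qed
  qed
  show "geod_ray E s" using nbt_geod sE sN unfolding nbt_def by blast
  show "s 0 = y" using p0 unfolding s_def by simp
  show "s (D + j) = t j" for j using pD gt(2) unfolding s_def by (cases j) auto
qed

lemma H:
  assumes om: "\<omega> \<in> ends E" and t1: "ray_to E a \<omega> 1 = c"
    and aw: "tdist E y c = tdist E y a + 1"
  shows "ray_to E y \<omega> (tdist E y a + j) = ray_to E a \<omega> j"
proof -
  define D where "D = tdist E y a"
  obtain p where p: "wk E p" "hd p = y" "last p = a" "length p = Suc D"
    using geo_walk[of y a] unfolding D_def by blast
  let ?t = "ray_to E a \<omega>"
  define s where "s = (\<lambda>i. if i \<le> D then p!i else ?t (i - D))"
  have far: "D \<le> tdist E y (?t 1)" using t1 aw unfolding D_def by simp
  note c = concat_ray[OF p D_def RT_geod[OF om] RT_0[OF om] far s_def]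
  have "\<forall>j. ?t (0 + j) = s (D + j)" using c(3) by simp
  then have "coinc ?t s" unfolding coinc_def by blast
  then have "s \<in> \<omega>" using ends_closed[OF om RT_in[OF om] c(1)] by blast
  then have "ray_to E y \<omega> = s" using RT_uniq[OF om] c(2) by blast
  then show ?thesis using c(3) unfolding D_def by simp
qed

lemma fwd_iff: "\<omega> \<in> fwd E (a, c) \<longleftrightarrow> \<omega> \<in> ends E \<and> ray_to E a \<omega> 1 = c"
  unfolding fwd_def by simp

lemma fwd_ends: "fwd E e \<subseteq> ends E" unfolding fwd_def by auto

end

definition cone :: "('v \<Rightarrow> 'v \<Rightarrow> bool) \<Rightarrow> 'v \<Rightarrow> nat \<Rightarrow> 'v \<Rightarrow> (nat \<Rightarrow> 'v) set set" where
  "cone E b n v = {\<omega> \<in> ends E. ray_to E b \<omega> n = v}"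

context tr begin

lemma horo_gen:
  assumes om: "\<omega> \<in> ends E" and c: "\<And>j. ray_to E x \<omega> (p + j) = ray_to E y \<omega> (q + j)"
  shows "horo E \<omega> x y = int p - int q"
proof -
  let ?r = "ray_to E x \<omega>" and ?s = "ray_to E y \<omega>"
  have gr: "geod_ray E ?r" and gs: "geod_ray E ?s" using RT_geod[OF om] by blast+
  have key: "int (tdist E x w) - int (tdist E y w) = int p - int q"
    if w: "w \<in> range ?r" "w \<in> range ?s" for w
  proof -
    obtain m where m: "w = ?r m" using w(1) by blast
    obtain m' where m': "w = ?s m'" using w(2) by blast
    have "ray_to E w \<omega> = (\<lambda>i. ?r (m + i))" using RT_tail[OF om, of x m] m by simp
    moreover have "ray_to E w \<omega> = (\<lambda>i. ?s (m' + i))" using RT_tail[OF om, of y m'] m' by simp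
    ultimately have t: "\<And>i. ?r (m + i) = ?s (m' + i)" by metis
    have "?s (m' + p) = ?r (m + p)" using t[of p] by simp
    also have "\<dots> = ?r (p + m)" by (simp add: add.commute)
    also have "\<dots> = ?s (q + m)" using c[of m] .
    finally have "m' + p = q + m" using geod_inj[OF gs] by blast
    moreover have "tdist E x w = m" using geod_d0[OF gr, of m] m RT_0[OF om] by simp
    moreover have "tdist E y w = m'" using geod_d0[OF gs, of m'] m' RT_0[OF om] by simp
    ultimately show ?thesis by simp
  qed
  show ?thesis unfolding horo_def
  proof (rule the_equality)
    show "\<forall>w. w \<in> range ?r \<and> w \<in> range ?s \<longrightarrow> int p - int q = int (tdist E x w) - int (tdist E y w)"
      using key by simp
  next
    fix k assume h: "\<forall>w. w \<in> range ?r \<and> w \<in> range ?s \<longrightarrow> k = int (tdist E x w) - int (tdist E y w)"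
    have "?r (p + 0) \<in> range ?r" by (rule rangeI)
    moreover have "?r (p + 0) \<in> range ?s" unfolding c[of 0] by (rule rangeI)
    ultimately have "?r (p + 0) \<in> range ?r \<and> ?r (p + 0) \<in> range ?s" by blast
    then show "k = int p - int q" using h key by blast
  qed
qed

lemma horo_val:
  assumes om: "\<omega> \<in> fwd E (a, c)" and ax: "tdist E x c = tdist E x a + 1"
    and ay: "tdist E y c = tdist E y a + 1"
  shows "horo E \<omega> x y = int (tdist E x a) - int (tdist E y a)"
proof -
  have o: "\<omega> \<in> ends E" "ray_to E a \<omega> 1 = c" using om fwd_iff by auto
  show ?thesis
  proof (rule horo_gen[OF o(1)])
    fix j show "ray_to E x \<omega> (tdist E x a + j) = ray_to E y \<omega> (tdist E y a + j)"
      using H[OF o ax] H[OF o ay] by simp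
  qed
qed

lemma fwd_compl:
  assumes om: "\<omega> \<in> ends E" and e: "E a c"
  shows "\<omega> \<in> fwd E (c, a) \<longleftrightarrow> \<omega> \<notin> fwd E (a, c)"
proof -
  let ?t = "ray_to E a \<omega>"
  have gt: "geod_ray E ?t" using RT_geod[OF om] .
  show ?thesis
  proof (cases "?t 1 = c")
    case True
    have "ray_to E c \<omega> = (\<lambda>i. ?t (1 + i))" using RT_tail[OF om, of a 1] True by simp
    then have "ray_to E c \<omega> 1 = ?t (Suc (Suc 0))" by simp
    moreover have "?t (Suc (Suc 0)) \<noteq> ?t 0" using geod_inj[OF gt, of "Suc (Suc 0)" 0] by auto
    ultimately have "ray_to E c \<omega> 1 \<noteq> a" using RT_0[OF om] by simp
    then show ?thesis using fwd_iff om True by auto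
  next
    case False
    define s where "s = (\<lambda>i. if i = 0 then c else ?t (i - 1))"
    have sE: "E (s i) (s (Suc i))" for i
      using Esym[OF e] geod_E[OF gt, of "i - 1"] RT_0[OF om, of a] unfolding s_def
      by (cases i) auto
    have sN: "s i \<noteq> s (Suc (Suc i))" for i
    proof (cases i)
      case 0 then show ?thesis using False unfolding s_def by auto
    next
      case (Suc k)
      then show ?thesis using geod_inj[OF gt, of k "Suc (Suc k)"] unfolding s_def by auto
    qed
    have gs: "geod_ray E s" using nbt_geod sE sN unfolding nbt_def by blast
    have "\<forall>j. ?t (0 + j) = s (1 + j)" unfolding s_def by simp
    then have "coinc ?t s" unfolding coinc_def by blast
    then have "s \<in> \<omega>" using ends_closed[OF om RT_in[OF om] gs] by blast
    then have "ray_to E c \<omega> = s" using RT_uniq[OF om] unfolding s_def by simp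
    then have "ray_to E c \<omega> 1 = a" unfolding s_def using RT_0[OF om] by simp
    then show ?thesis using fwd_iff om False by auto
  qed
qed

lemma CT:
  assumes om: "\<omega> \<in> ends E" and w: "\<omega>' \<in> fwd E (ray_to E a \<omega> j, ray_to E a \<omega> (Suc j))"
  shows "\<omega>' \<in> fwd E (a, ray_to E a \<omega> 1)"
proof -
  let ?s = "ray_to E a \<omega>"
  have gs: "geod_ray E ?s" using RT_geod[OF om] .
  have o': "\<omega>' \<in> ends E" "ray_to E (?s j) \<omega>' 1 = ?s (Suc j)" using w fwd_iff by auto
  have dj: "tdist E a (?s j) = j" "tdist E a (?s (Suc j)) = Suc j"
    using geod_d0[OF gs] RT_0[OF om] by auto
  have "ray_to E a \<omega>' (tdist E a (?s j) + 1) = ray_to E (?s j) \<omega>' 1"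
    by (rule H[OF o']) (use dj in simp)
  then have "ray_to E a \<omega>' (Suc j) = ?s (Suc j)" using o'(2) dj by simp
  then have "ray_to E a \<omega>' 1 = ?s 1"
    using geod_prefix_eq[OF RT_geod[OF o'(1), of a] gs, of "Suc j" 1] RT_0[OF om] RT_0[OF o'(1)] by simp
  then show ?thesis using o' fwd_iff by auto
qed

lemma cone_fwd:
  assumes om: "\<omega> \<in> ends E"
  shows "fwd E (ray_to E b \<omega> n, ray_to E b \<omega> (Suc n)) = cone E b (Suc n) (ray_to E b \<omega> (Suc n))"
proof -
  let ?r = "ray_to E b \<omega>"
  have gr: "geod_ray E ?r" using RT_geod[OF om] .
  have dn: "tdist E b (?r n) = n" "tdist E b (?r (Suc n)) = Suc n"
    using geod_d0[OF gr] RT_0[OF om] by auto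
  show ?thesis
  proof (intro set_eqI iffI)
    fix \<omega>' assume w: "\<omega>' \<in> fwd E (?r n, ?r (Suc n))"
    have o': "\<omega>' \<in> ends E" "ray_to E (?r n) \<omega>' 1 = ?r (Suc n)" using w fwd_iff by auto
    have "ray_to E b \<omega>' (tdist E b (?r n) + 1) = ray_to E (?r n) \<omega>' 1"
      by (rule H[OF o']) (use dn in simp)
    then show "\<omega>' \<in> cone E b (Suc n) (?r (Suc n))" using o' dn unfolding cone_def by simp
  next
    fix \<omega>' assume w: "\<omega>' \<in> cone E b (Suc n) (?r (Suc n))"
    then have o': "\<omega>' \<in> ends E" "ray_to E b \<omega>' (Suc n) = ?r (Suc n)" unfolding cone_def by auto
    have "ray_to E b \<omega>' n = ?r n"
      using geod_prefix_eq[OF RT_geod[OF o'(1), of b] gr, of "Suc n" n] o'(2) RT_0[OF om] RT_0[OF o'(1)] by simp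
    then have "ray_to E (?r n) \<omega>' = (\<lambda>i. ray_to E b \<omega>' (n + i))" using RT_tail[OF o'(1), of b n] by simp
    then have "ray_to E (?r n) \<omega>' 1 = ?r (Suc n)" using o'(2) by simp
    then show "\<omega>' \<in> fwd E (?r n, ?r (Suc n))" using o'(1) fwd_iff by auto
  qed
qed

lemma cone_mono:
  assumes om: "\<omega> \<in> ends E" and nm: "n \<le> m"
  shows "cone E b m (ray_to E b \<omega> m) \<subseteq> cone E b n (ray_to E b \<omega> n)"
proof
  fix \<omega>' assume "\<omega>' \<in> cone E b m (ray_to E b \<omega> m)"
  then have o': "\<omega>' \<in> ends E" "ray_to E b \<omega>' m = ray_to E b \<omega> m" unfolding cone_def by auto
  have "ray_to E b \<omega>' n = ray_to E b \<omega> n"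
    using geod_prefix_eq[OF RT_geod[OF o'(1), of b] RT_geod[OF om, of b], of m n] o'(2) RT_0[OF om] RT_0[OF o'(1)] nm
    by simp
  then show "\<omega>' \<in> cone E b n (ray_to E b \<omega> n)" using o'(1) unfolding cone_def by simp
qed

lemma cone_self: "\<omega> \<in> ends E \<Longrightarrow> \<omega> \<in> cone E b n (ray_to E b \<omega> n)"
  unfolding cone_def by simp

end

context tr begin

lemma aut_E: "\<gamma> \<in> Aut E \<Longrightarrow> E (\<gamma> x) (\<gamma> y) \<longleftrightarrow> E x y" unfolding Aut_def by blast
lemma aut_bij: "\<gamma> \<in> Aut E \<Longrightarrow> bij \<gamma>" unfolding Aut_def by blast
lemma aut_inv_f: "\<gamma> \<in> Aut E \<Longrightarrow> inv \<gamma> (\<gamma> x) = x" using aut_bij bij_is_inj inv_f_f by metis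
lemma aut_f_inv: "\<gamma> \<in> Aut E \<Longrightarrow> \<gamma> (inv \<gamma> x) = x" using aut_bij bij_is_surj surj_f_inv_f by metis
lemma aut_inj: "\<gamma> \<in> Aut E \<Longrightarrow> \<gamma> x = \<gamma> y \<Longrightarrow> x = y" using aut_inv_f by metis

lemma aut_inv: "\<gamma> \<in> Aut E \<Longrightarrow> inv \<gamma> \<in> Aut E"
proof -
  assume g: "\<gamma> \<in> Aut E"
  have "bij (inv \<gamma>)" using aut_bij[OF g] by (simp add: bij_imp_bij_inv)
  moreover have "E x y \<longleftrightarrow> E (inv \<gamma> x) (inv \<gamma> y)" for x y
    using aut_E[OF g, of "inv \<gamma> x" "inv \<gamma> y"] aut_f_inv[OF g] by simp
  ultimately show ?thesis unfolding Aut_def by blast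
qed

lemma aut_wk: "\<gamma> \<in> Aut E \<Longrightarrow> wk E xs \<Longrightarrow> wk E (map \<gamma> xs)"
proof (induction xs)
  case Nil then show ?case by simp
next
  case (Cons x xs)
  then show ?case
  proof (cases xs)
    case Nil then show ?thesis by simp
  next
    case (Cons y ys)
    then show ?thesis using Cons.prems Cons.IH aut_E[OF Cons.prems(1)] by auto
  qed
qed

lemma aut_d_le: "\<gamma> \<in> Aut E \<Longrightarrow> tdist E (\<gamma> x) (\<gamma> y) \<le> tdist E x y"
proof -
  assume g: "\<gamma> \<in> Aut E"
  obtain p where p: "wk E p" "hd p = x" "last p = y" "length p = Suc (tdist E x y)"
    using d_walk by blast
  have "wk E (map \<gamma> p)" using aut_wk[OF g p(1)] .
  moreover have "p \<noteq> []" using p(1) by auto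
  ultimately show ?thesis using d_le[of "map \<gamma> p"] p by (simp add: hd_map last_map)
qed

lemma aut_d: "\<gamma> \<in> Aut E \<Longrightarrow> tdist E (\<gamma> x) (\<gamma> y) = tdist E x y"
proof -
  assume g: "\<gamma> \<in> Aut E"
  have "tdist E (inv \<gamma> (\<gamma> x)) (inv \<gamma> (\<gamma> y)) \<le> tdist E (\<gamma> x) (\<gamma> y)"
    using aut_d_le[OF aut_inv[OF g]] by blast
  then show ?thesis using aut_d_le[OF g, of x y] aut_inv_f[OF g] by simp
qed

lemma aut_geod: "\<gamma> \<in> Aut E \<Longrightarrow> geod_ray E r \<Longrightarrow> geod_ray E (\<gamma> \<circ> r)"
  unfolding geod_ray_def using aut_d by simp

lemma aut_coinc: "coinc r s \<Longrightarrow> coinc (\<gamma> \<circ> r) (\<gamma> \<circ> s)"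
proof -
  assume "coinc r s"
  then obtain a b where "\<And>j. r (a + j) = s (b + j)" unfolding coinc_def by blast
  then have "\<forall>j. (\<gamma> \<circ> r) (a + j) = (\<gamma> \<circ> s) (b + j)" by simp
  then show ?thesis unfolding coinc_def by blast
qed

lemma comp_inv_cancel: "\<gamma> \<in> Aut E \<Longrightarrow> inv \<gamma> \<circ> (\<gamma> \<circ> r) = r"
  using aut_inv_f by (auto simp: fun_eq_iff)

lemma comp_inv_cancel2: "\<gamma> \<in> Aut E \<Longrightarrow> \<gamma> \<circ> (inv \<gamma> \<circ> r) = r"
  using aut_f_inv by (auto simp: fun_eq_iff)

lemma act_end_ends:
  assumes g: "\<gamma> \<in> Aut E" and om: "\<omega> \<in> ends E"
  shows "act_end \<gamma> \<omega> \<in> ends E"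
proof -
  obtain r where r: "geod_ray E r" "\<omega> = {s. geod_ray E s \<and> coinc r s}" using om by (rule ends_obtain)
  have "act_end \<gamma> \<omega> = {s. geod_ray E s \<and> coinc (\<gamma> \<circ> r) s}"
  proof (intro set_eqI iffI)
    fix s assume "s \<in> act_end \<gamma> \<omega>"
    then obtain s' where "s = \<gamma> \<circ> s'" "geod_ray E s'" "coinc r s'" using r unfolding act_end_def by blast
    then show "s \<in> {s. geod_ray E s \<and> coinc (\<gamma> \<circ> r) s}" using aut_geod[OF g] aut_coinc by blast
  next
    fix s assume s: "s \<in> {s. geod_ray E s \<and> coinc (\<gamma> \<circ> r) s}"
    then have "geod_ray E (inv \<gamma> \<circ> s)" using aut_geod[OF aut_inv[OF g]] by blast
    moreover have "coinc r (inv \<gamma> \<circ> s)"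
      using aut_coinc[of "\<gamma> \<circ> r" s "inv \<gamma>"] s comp_inv_cancel[OF g, of r] by simp
    ultimately have "inv \<gamma> \<circ> s \<in> \<omega>" using r by blast
    then show "s \<in> act_end \<gamma> \<omega>" unfolding act_end_def using comp_inv_cancel2[OF g, of s]
      by (metis image_eqI)
  qed
  then show ?thesis using ends_iff aut_geod[OF g r(1)] by blast
qed

lemma act_end_RT:
  assumes g: "\<gamma> \<in> Aut E" and om: "\<omega> \<in> ends E"
  shows "ray_to E (\<gamma> x) (act_end \<gamma> \<omega>) = \<gamma> \<circ> ray_to E x \<omega>"
proof (rule RT_uniq[OF act_end_ends[OF g om]])
  show "\<gamma> \<circ> ray_to E x \<omega> \<in> act_end \<gamma> \<omega>" unfolding act_end_def using RT_in[OF om] by blast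
  show "(\<gamma> \<circ> ray_to E x \<omega>) 0 = \<gamma> x" using RT_0[OF om] by simp
qed

lemma act_end_inv: "\<gamma> \<in> Aut E \<Longrightarrow> act_end (inv \<gamma>) (act_end \<gamma> \<omega>) = \<omega>"
proof -
  assume g: "\<gamma> \<in> Aut E"
  have "act_end (inv \<gamma>) (act_end \<gamma> \<omega>) = (\<lambda>x. inv \<gamma> \<circ> (\<gamma> \<circ> x)) ` \<omega>"
    (is "_ = ?X") unfolding act_end_def by (simp add: image_image)
  moreover
  have h: "(\<lambda>x. inv \<gamma> \<circ> (\<gamma> \<circ> x)) = (\<lambda>x. x)" by (rule ext) (rule comp_inv_cancel[OF g])
  have "(\<lambda>x. inv \<gamma> \<circ> (\<gamma> \<circ> x)) ` \<omega> = \<omega>" unfolding h by simp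
  ultimately show ?thesis by (rule trans)
qed

lemma act_end_inv2: "\<gamma> \<in> Aut E \<Longrightarrow> act_end \<gamma> (act_end (inv \<gamma>) \<omega>) = \<omega>"
proof -
  assume g: "\<gamma> \<in> Aut E"
  have "act_end \<gamma> (act_end (inv \<gamma>) \<omega>) = (\<lambda>x. \<gamma> \<circ> (inv \<gamma> \<circ> x)) ` \<omega>"
    (is "_ = ?X") unfolding act_end_def by (simp add: image_image)
  moreover
  have h: "(\<lambda>x. \<gamma> \<circ> (inv \<gamma> \<circ> x)) = (\<lambda>x. x)" by (rule ext) (rule comp_inv_cancel2[OF g])
  have "(\<lambda>x. \<gamma> \<circ> (inv \<gamma> \<circ> x)) ` \<omega> = \<omega>" unfolding h by simp
  ultimately show ?thesis by (rule trans)
qed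

lemma act_end_fwd:
  assumes g: "\<gamma> \<in> Aut E" and om: "\<omega> \<in> ends E"
  shows "act_end \<gamma> \<omega> \<in> fwd E (\<gamma> a, \<gamma> c) \<longleftrightarrow> \<omega> \<in> fwd E (a, c)"
proof -
  have "ray_to E (\<gamma> a) (act_end \<gamma> \<omega>) 1 = \<gamma> (ray_to E a \<omega> 1)" using act_end_RT[OF g om] by simp
  then show ?thesis using act_end_ends[OF g om] om aut_inj[OF g] fwd_iff by metis
qed

lemma pre_fwd:
  assumes g: "\<gamma> \<in> Aut E"
  shows "{\<omega> \<in> ends E. act_end \<gamma> \<omega> \<in> fwd E (a, c)} = fwd E (inv \<gamma> a, inv \<gamma> c)"
proof -
  have "act_end \<gamma> \<omega> \<in> fwd E (a, c) \<longleftrightarrow> \<omega> \<in> fwd E (inv \<gamma> a, inv \<gamma> c)" if "\<omega> \<in> ends E" for \<omega>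
    using act_end_fwd[OF g that, of "inv \<gamma> a" "inv \<gamma> c"] aut_f_inv[OF g] by simp
  then show ?thesis using fwd_ends by blast
qed

end

context tr begin

lemma topspace_ends: "topspace (ends_top E) = ends E"
proof
  show "topspace (ends_top E) \<subseteq> ends E" unfolding ends_top_def using fwd_ends by auto
  show "ends E \<subseteq> topspace (ends_top E)"
  proof
    fix \<omega> assume om: "\<omega> \<in> ends E"
    let ?c = "ray_to E b \<omega> 1"
    have "E b ?c" using geod_E[OF RT_geod[OF om, of b], of 0] RT_0[OF om] by simp
    then have "(b, ?c) \<in> oriented_edges E" unfolding oriented_edges_def by simp
    moreover have "\<omega> \<in> fwd E (b, ?c)" using om fwd_iff by auto
    ultimately show "\<omega> \<in> topspace (ends_top E)" unfolding ends_top_def by auto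
  qed
qed

lemma fwd_open: "E a c \<Longrightarrow> openin (ends_top E) (fwd E (a, c))"
  unfolding ends_top_def openin_topology_generated_by_iff oriented_edges_def
  by (rule generate_topology_on.Basis) auto

lemma fwd_clopen: "E a c \<Longrightarrow> clopen_ends E (fwd E (a, c))"
proof -
  assume e: "E a c"
  have "topspace (ends_top E) - fwd E (a, c) = fwd E (c, a)"
    using fwd_compl[OF _ e] fwd_ends topspace_ends by blast
  then show ?thesis unfolding clopen_ends_def closedin_def
    using fwd_open[OF e] fwd_open[OF Esym[OF e]] fwd_ends topspace_ends by simp
qed

lemma clopen_sub: "clopen_ends E A \<Longrightarrow> A \<subseteq> ends E"
  unfolding clopen_ends_def using openin_subset topspace_ends by blast

lemma clopen_empty: "clopen_ends E {}"
  unfolding clopen_ends_def by simp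

lemma clopen_Un: "clopen_ends E A \<Longrightarrow> clopen_ends E B \<Longrightarrow> clopen_ends E (A \<union> B)"
  unfolding clopen_ends_def by (simp add: openin_Un closedin_Un)

lemma clopen_Int: "clopen_ends E A \<Longrightarrow> clopen_ends E B \<Longrightarrow> clopen_ends E (A \<inter> B)"
  unfolding clopen_ends_def by (simp add: openin_Int closedin_Int)

lemma clopen_compl: "clopen_ends E A \<Longrightarrow> clopen_ends E (ends E - A)"
proof -
  assume c: "clopen_ends E A"
  have sub: "A \<subseteq> ends E" using clopen_sub[OF c] .
  have o: "openin (ends_top E) (ends E - A)" using c topspace_ends unfolding clopen_ends_def closedin_def by simp
  have "ends E - (ends E - A) = A" using sub by blast
  then have "closedin (ends_top E) (ends E - A)" unfolding closedin_def topspace_ends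
    using c unfolding clopen_ends_def by simp
  then show ?thesis using o unfolding clopen_ends_def by blast
qed

lemma open_cone:
  assumes "openin (ends_top E) U" "\<omega> \<in> U"
  shows "\<exists>n. cone E b n (ray_to E b \<omega> n) \<subseteq> U"
proof -
  have "generate_topology_on (fwd E ` oriented_edges E) U"
    using assms(1) unfolding ends_top_def openin_topology_generated_by_iff .
  then show ?thesis using assms(2)
  proof (induction arbitrary: \<omega> rule: generate_topology_on.induct)
    case Empty then show ?case by simp
  next
    case (Int A B)
    obtain n1 where n1: "cone E b n1 (ray_to E b \<omega> n1) \<subseteq> A" using Int by blast
    obtain n2 where n2: "cone E b n2 (ray_to E b \<omega> n2) \<subseteq> B" using Int by blast
    have "openin (ends_top E) A" unfolding ends_top_def openin_topology_generated_by_iff by (rule Int.hyps(1))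
    then have "A \<subseteq> ends E" using openin_subset topspace_ends by blast
    then have om: "\<omega> \<in> ends E" using Int.prems by blast
    have "cone E b (max n1 n2) (ray_to E b \<omega> (max n1 n2)) \<subseteq> A \<inter> B"
      using cone_mono[OF om, of n1 "max n1 n2" b] cone_mono[OF om, of n2 "max n1 n2" b] n1 n2 by auto
    then show ?case by blast
  next
    case (UN K)
    then obtain k where "k \<in> K" "\<omega> \<in> k" by blast
    then obtain n where "cone E b n (ray_to E b \<omega> n) \<subseteq> k" using UN.IH by blast
    then show ?case using \<open>k \<in> K\<close> by blast
  next
    case (Basis s)
    then obtain a c where ac: "E a c" "s = fwd E (a, c)" unfolding oriented_edges_def by auto
    have om: "\<omega> \<in> ends E" "ray_to E a \<omega> 1 = c" using Basis.prems ac fwd_iff by auto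
    let ?r = "ray_to E b \<omega>" and ?t = "ray_to E a \<omega>"
    obtain p q where pq: "\<And>j. ?r (p + j) = ?t (q + j)"
      using ends_coinc[OF om(1) RT_in[OF om(1)] RT_in[OF om(1)]] unfolding coinc_def by blast
    have "cone E b (Suc p) (?r (Suc p)) = fwd E (?r p, ?r (Suc p))" using cone_fwd[OF om(1)] by simp
    also have "\<dots> = fwd E (?t q, ?t (Suc q))" using pq[of 0] pq[of 1] by simp
    also have "\<dots> \<subseteq> fwd E (a, ?t 1)" using CT[OF om(1)] by blast
    finally show ?case using om(2) ac(2) by blast
  qed
qed

lemma pre_open:
  assumes g: "\<gamma> \<in> Aut E" and o: "openin (ends_top E) U"
  shows "openin (ends_top E) {\<omega> \<in> ends E. act_end \<gamma> \<omega> \<in> U}"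
proof -
  have "generate_topology_on (fwd E ` oriented_edges E) U"
    using o unfolding ends_top_def openin_topology_generated_by_iff .
  then show ?thesis
  proof (induction rule: generate_topology_on.induct)
    case Empty then show ?case by simp
  next
    case (Int A B)
    have "{\<omega> \<in> ends E. act_end \<gamma> \<omega> \<in> A \<inter> B} = {\<omega> \<in> ends E. act_end \<gamma> \<omega> \<in> A} \<inter> {\<omega> \<in> ends E. act_end \<gamma> \<omega> \<in> B}"
      by blast
    then show ?case using openin_Int[OF Int.IH] by simp
  next
    case (UN K)
    have "{\<omega> \<in> ends E. act_end \<gamma> \<omega> \<in> \<Union>K} = \<Union> ((\<lambda>k. {\<omega> \<in> ends E. act_end \<gamma> \<omega> \<in> k}) ` K)"
      by blast
    moreover have "openin (ends_top E) (\<Union> ((\<lambda>k. {\<omega> \<in> ends E. act_end \<gamma> \<omega> \<in> k}) ` K))"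
      by (rule openin_Union) (use UN.IH in blast)
    ultimately show ?case by simp
  next
    case (Basis s)
    then obtain a c where ac: "E a c" "s = fwd E (a, c)" unfolding oriented_edges_def by auto
    have "E (inv \<gamma> a) (inv \<gamma> c)" using aut_E[OF aut_inv[OF g]] ac(1) by simp
    then show ?case using pre_fwd[OF g] ac(2) fwd_open by simp
  qed
qed

lemma pre_clopen:
  assumes g: "\<gamma> \<in> Aut E" and c: "clopen_ends E A"
  shows "clopen_ends E {\<omega> \<in> ends E. act_end \<gamma> \<omega> \<in> A}"
proof -
  have o1: "openin (ends_top E) {\<omega> \<in> ends E. act_end \<gamma> \<omega> \<in> A}"
    using pre_open[OF g] c unfolding clopen_ends_def by blast
  have "openin (ends_top E) (ends E - A)" using c clopen_compl unfolding clopen_ends_def by blast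
  then have o2: "openin (ends_top E) {\<omega> \<in> ends E. act_end \<gamma> \<omega> \<in> ends E - A}"
    using pre_open[OF g] by blast
  have "{\<omega> \<in> ends E. act_end \<gamma> \<omega> \<in> ends E - A} = ends E - {\<omega> \<in> ends E. act_end \<gamma> \<omega> \<in> A}"
    using act_end_ends[OF g] by blast
  then show ?thesis unfolding clopen_ends_def closedin_def using o1 o2 topspace_ends by auto
qed

end

context tr begin

lemma sphere_finite:
  assumes lf: "locally_finite_graph E"
  shows "finite {v. tdist E b v = n}"
proof (induction n)
  case 0 then show ?case using d_zero_iff by simp
next
  case (Suc n)
  have "{v. tdist E b v = Suc n} \<subseteq> (\<Union>u\<in>{v. tdist E b v = n}. {y. E u y})"
  proof
    fix v assume v: "v \<in> {v. tdist E b v = Suc n}"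
    then have "v \<noteq> b" by auto
    then obtain u where "E u v" "tdist E b u + 1 = tdist E b v" using par_ex by blast
    then show "v \<in> (\<Union>u\<in>{v. tdist E b v = n}. {y. E u y})" using v by auto
  qed
  moreover have "finite (\<Union>u\<in>{v. tdist E b v = n}. {y. E u y})"
    using Suc lf unfolding locally_finite_graph_def by blast
  ultimately show ?case using finite_subset by blast
qed

lemma RT_dist: "\<omega> \<in> ends E \<Longrightarrow> tdist E b (ray_to E b \<omega> n) = n"
  using geod_d0[OF RT_geod, of \<omega> b n] RT_0 by simp

lemma level_finite:
  assumes lf: "locally_finite_graph E" and that: "X \<subseteq> ends E"
  shows "finite ((\<lambda>\<omega>. ray_to E b \<omega> n) ` X)"
proof -
  have "(\<lambda>\<omega>. ray_to E b \<omega> n) ` X \<subseteq> {v. tdist E b v = n}" using that RT_dist by auto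
  then show ?thesis using sphere_finite[OF lf] finite_subset by blast
qed

definition dec :: "(nat \<Rightarrow> 'v) set set \<Rightarrow> 'v \<Rightarrow> (nat \<Rightarrow> 'v) set \<Rightarrow> nat \<Rightarrow> bool" where
  "dec B b \<omega> M \<longleftrightarrow> cone E b M (ray_to E b \<omega> M) \<subseteq> B \<or> cone E b M (ray_to E b \<omega> M) \<inter> B = {}"

lemma dec_mono: "\<omega> \<in> ends E \<Longrightarrow> dec B b \<omega> M \<Longrightarrow> M \<le> M' \<Longrightarrow> dec B b \<omega> M'"
  unfolding dec_def using cone_mono[of \<omega> M M' b] by blast

lemma dec_ex:
  assumes c: "clopen_ends E B" and om: "\<omega> \<in> ends E"
  shows "\<exists>n. dec B b \<omega> n"
proof (cases "\<omega> \<in> B")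
  case True
  then obtain n where "cone E b n (ray_to E b \<omega> n) \<subseteq> B"
    using open_cone c unfolding clopen_ends_def by blast
  then show ?thesis unfolding dec_def by blast
next
  case False
  have "openin (ends_top E) (ends E - B)" using clopen_compl[OF c] unfolding clopen_ends_def by blast
  then obtain n where "cone E b n (ray_to E b \<omega> n) \<subseteq> ends E - B"
    using open_cone om False by blast
  then show ?thesis unfolding dec_def by blast
qed

lemma cone_same: "\<omega> \<in> cone E b k v \<Longrightarrow> cone E b k (ray_to E b \<omega> k) = cone E b k v"
  unfolding cone_def by auto

definition ib :: "(nat \<Rightarrow> 'v) set set \<Rightarrow> 'v \<Rightarrow> 'v \<Rightarrow> nat \<Rightarrow> bool" where
  "ib B b v k \<longleftrightarrow> (\<forall>M \<ge> k. \<exists>\<omega> \<in> cone E b k v. \<not> dec B b \<omega> M)"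

lemma ib_step:
  assumes lf: "locally_finite_graph E" and h: "ib B b v k"
  shows "\<exists>u. E v u \<and> tdist E b u = Suc k \<and> cone E b (Suc k) u \<subseteq> cone E b k v \<and> ib B b u (Suc k)"
proof -
  define X where "X = cone E b k v"
  define C where "C = (\<lambda>\<omega>. ray_to E b \<omega> (Suc k)) ` X"
  have X: "X \<subseteq> ends E" unfolding X_def cone_def by auto
  have fC: "finite C" unfolding C_def using level_finite[OF lf X] .
  define P where "P = (\<lambda>u M. \<exists>\<omega> \<in> cone E b (Suc k) u. \<not> dec B b \<omega> M)"
  have cov: "\<exists>u\<in>C. P u M" if Mk: "Suc k \<le> M" for M
  proof -
    have "k \<le> M" using Mk by simp
    then have "\<exists>\<omega> \<in> X. \<not> dec B b \<omega> M" using h unfolding ib_def X_def by blast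
    then obtain \<omega> where w: "\<omega> \<in> X" "\<not> dec B b \<omega> M" by blast
    then have "\<omega> \<in> cone E b (Suc k) (ray_to E b \<omega> (Suc k))" using cone_self X by blast
    then show ?thesis using w unfolding C_def P_def by blast
  qed
  have "\<exists>u\<in>C. infinite {M. P u M}"
  proof (rule ccontr)
    assume "\<not> (\<exists>u\<in>C. infinite {M. P u M})"
    then have "finite (\<Union>u\<in>C. {M. P u M})" using fC by blast
    moreover have "{Suc k..} \<subseteq> (\<Union>u\<in>C. {M. P u M})" using cov by auto
    ultimately show False using finite_subset infinite_Ici by blast
  qed
  then obtain u where u: "u \<in> C" "infinite {M. P u M}" by blast
  have Pmono: "P u M" if PM: "P u M'" "M \<le> M'" for M M'
  proof -
    obtain \<omega> where w: "\<omega> \<in> cone E b (Suc k) u" "\<not> dec B b \<omega> M'" using PM(1) unfolding P_def by blast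
    have "\<omega> \<in> ends E" using w unfolding cone_def by auto
    then have "\<not> dec B b \<omega> M" using dec_mono w(2) PM(2) by blast
    then show ?thesis using w(1) unfolding P_def by blast
  qed
  have allP: "P u M" for M
  proof -
    obtain M' where "M' \<in> {M. P u M}" "M \<le> M'"
      using u(2) by (meson infinite_nat_iff_unbounded_le)
    then show ?thesis using Pmono by blast
  qed
  obtain \<omega>0 where w0: "\<omega>0 \<in> X" "u = ray_to E b \<omega>0 (Suc k)" using u(1) unfolding C_def by blast
  have o0: "\<omega>0 \<in> ends E" "ray_to E b \<omega>0 k = v" using w0 unfolding X_def cone_def by auto
  have "E v u" using geod_E[OF RT_geod[OF o0(1), of b], of k] o0 w0 by simp
  moreover have "tdist E b u = Suc k" using RT_dist[OF o0(1)] w0 by simp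
  moreover have "cone E b (Suc k) u \<subseteq> cone E b k v"
    using cone_mono[OF o0(1), of k "Suc k" b] w0 o0 by simp
  moreover have "ib B b u (Suc k)" using allP unfolding ib_def P_def by blast
  ultimately show ?thesis by blast
qed

lemma compact_dec:
  assumes lf: "locally_finite_graph E" and c: "clopen_ends E B"
  shows "\<exists>N. \<forall>\<omega>\<in>ends E. dec B b \<omega> N"
proof (rule ccontr)
  assume "\<not> (\<exists>N. \<forall>\<omega>\<in>ends E. dec B b \<omega> N)"
  then have h0: "\<forall>N. \<exists>\<omega>\<in>ends E. \<not> dec B b \<omega> N" by blast
  have c0: "cone E b 0 b = ends E" unfolding cone_def using RT_0 by auto
  have ib0: "ib B b b 0" unfolding ib_def c0 using h0 by blast
  define nxt where "nxt = (\<lambda>v k. SOME u. E v u \<and> tdist E b u = Suc k \<and> cone E b (Suc k) u \<subseteq> cone E b k v \<and> ib B b u (Suc k))"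
  define p where "p = rec_nat b (\<lambda>k v. nxt v k)"
  have p0: "p 0 = b" unfolding p_def by simp
  have pS: "p (Suc k) = nxt (p k) k" for k unfolding p_def by simp
  have inv: "ib B b (p k) k \<and> tdist E b (p k) = k" for k
  proof (induction k)
    case 0 then show ?case using ib0 p0 by simp
  next
    case (Suc k)
    then have "\<exists>u. E (p k) u \<and> tdist E b u = Suc k \<and> cone E b (Suc k) u \<subseteq> cone E b k (p k) \<and> ib B b u (Suc k)"
      using ib_step[OF lf] by blast
    then have "E (p k) (p (Suc k)) \<and> tdist E b (p (Suc k)) = Suc k \<and> cone E b (Suc k) (p (Suc k)) \<subseteq> cone E b k (p k) \<and> ib B b (p (Suc k)) (Suc k)"
      unfolding pS nxt_def by (rule someI_ex)
    then show ?case by blast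
  qed
  have pE: "E (p k) (p (Suc k))" for k
  proof -
    have "\<exists>u. E (p k) u \<and> tdist E b u = Suc k \<and> cone E b (Suc k) u \<subseteq> cone E b k (p k) \<and> ib B b u (Suc k)"
      using ib_step[OF lf] inv by blast
    then have "E (p k) (p (Suc k)) \<and> tdist E b (p (Suc k)) = Suc k"
      unfolding pS nxt_def by (rule someI2_ex) blast
    then show ?thesis by blast
  qed
  have "p k \<noteq> p (Suc (Suc k))" for k using inv[of k] inv[of "Suc (Suc k)"] by auto
  then have gp: "geod_ray E p" using nbt_geod pE unfolding nbt_def by blast
  define \<omega> where "\<omega> = {s. geod_ray E s \<and> coinc p s}"
  have om: "\<omega> \<in> ends E" unfolding \<omega>_def using ends_iff gp by blast
  have "p \<in> \<omega>" unfolding \<omega>_def using gp coinc_refl by blast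
  then have rp: "ray_to E b \<omega> = p" using RT_uniq[OF om] p0 by blast
  obtain n where n: "dec B b \<omega> n" using dec_ex[OF c om] by blast
  obtain \<omega>' where w': "\<omega>' \<in> cone E b n (p n)" "\<not> dec B b \<omega>' n" using inv[of n] unfolding ib_def by blast
  have "cone E b n (ray_to E b \<omega>' n) = cone E b n (p n)" using cone_same[OF w'(1)] .
  then have "dec B b \<omega>' n" using n rp unfolding dec_def by simp
  then show False using w'(2) by blast
qed

end

context tr begin

lemma Cat:
  assumes e: "E a c" and ay: "tdist E y c = tdist E y a + 1" and av: "tdist E v a = tdist E v c + 1"
  shows "tdist E y v = tdist E y a + 1 + tdist E c v"
proof -
  define N where "N = tdist E y a"
  define M where "M = tdist E c v"
  obtain p where p: "wk E p" "hd p = y" "last p = a" "length p = Suc N" "distinct p"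
    using geo_walk[of y a] unfolding N_def by blast
  obtain q where q: "wk E q" "hd q = c" "last q = v" "length q = Suc M" "distinct q"
    using geo_walk[of c v] unfolding M_def by blast
  have pd: "i \<le> N \<Longrightarrow> tdist E y (p!i) = i" for i using geo_nth_dist[OF p(1-3)] p(4) N_def by simp
  have qd: "i \<le> M \<Longrightarrow> tdist E c (q!i) = i" for i using geo_nth_dist[OF q(1-3)] q(4) M_def by simp
  have q0: "q!0 = c" using q(1,2) by (cases q) auto
  have p0: "p!0 = y" using p(1,2) by (cases p) auto
  have pN: "p!N = a" using wk_last_nth[OF p(1)] p(3,4) by simp
  have qM: "q!M = v" using wk_last_nth[OF q(1)] q(3,4) by simp
  have qv: "i \<le> M \<Longrightarrow> tdist E (q!i) v = M - i" for i
  proof -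
    assume i: "i \<le> M"
    have "tdist E (q!i) (q!M) \<le> M - i" using d_nth[OF q(1), of i M] i q(4) by simp
    moreover have "tdist E c v \<le> tdist E c (q!i) + tdist E (q!i) v" by (rule d_tri)
    ultimately show ?thesis using qd[OF i] qM i unfolding M_def by simp
  qed
  define f where "f = (\<lambda>i. if i \<le> N then p!i else q!(i - Suc N))"
  define n where "n = N + 1 + M"
  have fe: "E (f i) (f (Suc i))" if i: "i < n" for i
  proof -
    consider "i < N" | "i = N" | "N < i" by linarith
    then show ?thesis
    proof cases
      case 1 then show ?thesis using wk_nth[OF p(1), of i] p(4) unfolding f_def by simp
    next
      case 2 then show ?thesis using e pN q0 unfolding f_def by simp
    next
      case 3
      then have "Suc i - Suc N = Suc (i - Suc N)" "Suc (i - Suc N) < length q" using i q(4) unfolding n_def by auto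
      then show ?thesis using wk_nth[OF q(1), of "i - Suc N"] 3 unfolding f_def by simp
    qed
  qed
  have fn: "f i \<noteq> f (Suc (Suc i))" if i: "Suc (Suc i) \<le> n" for i
  proof -
    consider "Suc (Suc i) \<le> N" | "Suc i = N" | "i = N" | "N < i" by linarith
    then show ?thesis
    proof cases
      case 1
      then show ?thesis using pd[of i] pd[of "Suc (Suc i)"] unfolding f_def by auto
    next
      case 2
      then have "tdist E y (f i) = i" "f (Suc (Suc i)) = c" using pd[of i] q0 unfolding f_def by auto
      then show ?thesis using ay 2 unfolding N_def by auto
    next
      case 3
      then have "f i = a" "f (Suc (Suc i)) = q!1" using pN unfolding f_def by auto
      moreover have "1 \<le> M" using i 3 unfolding n_def by simp
      then have "tdist E (q!1) v = M - 1" using qv by simp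
      moreover have "tdist E a v = M + 1" using av d_sym unfolding M_def by simp
      ultimately show ?thesis using \<open>1 \<le> M\<close> by auto
    next
      case 4
      have "f i = q!(i - Suc N)" "f (Suc (Suc i)) = q!(Suc (Suc i) - Suc N)" using 4 unfolding f_def by auto
      moreover have "i - Suc N \<noteq> Suc (Suc i) - Suc N" using 4 by simp
      moreover have "i - Suc N < length q" "Suc (Suc i) - Suc N < length q" using i 4 q(4) unfolding n_def by auto
      ultimately show ?thesis using nth_eq_iff_index_eq[OF q(5)] by simp
    qed
  qed
  have "tdist E (f 0) (f n) = n" using nbt_seg[of n f n] fe fn by blast
  moreover have "f 0 = y" using p0 unfolding f_def by simp
  moreover have "f n = v" using qM unfolding f_def n_def by simp
  ultimately show ?thesis unfolding n_def N_def M_def by simp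
qed

lemma away_far:
  assumes e: "E a c" and ab: "tdist E b c = tdist E b a + 1" and yb: "tdist E b y \<le> tdist E b a"
  shows "tdist E y c = tdist E y a + 1"
proof -
  from d_adj[OF e, of y] show ?thesis
  proof
    assume h: "tdist E y a = tdist E y c + 1"
    have "tdist E b y = tdist E b a + 1 + tdist E c y" using Cat[OF e ab, of y] h d_sym by simp
    then show ?thesis using yb by simp
  qed
qed

lemma FA_add: "\<nu> \<in> FA E \<Longrightarrow> clopen_ends E A \<Longrightarrow> clopen_ends E B \<Longrightarrow> A \<inter> B = {}
   \<Longrightarrow> \<nu> (A \<union> B) = \<nu> A + \<nu> B"
  unfolding FA_def by simp

lemma FA_empty: "\<nu> \<in> FA E \<Longrightarrow> \<nu> {} = 0"
proof -
  assume nu: "\<nu> \<in> FA E"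
  have "\<nu> ({} \<union> {}) = \<nu> {} + \<nu> {}" by (rule FA_add[OF nu clopen_empty clopen_empty]) simp
  then show ?thesis by simp
qed

lemma clopen_Union: "finite P \<Longrightarrow> (\<forall>B\<in>P. clopen_ends E B) \<Longrightarrow> clopen_ends E (\<Union>P)"
proof (induction P rule: finite_induct)
  case empty then show ?case using clopen_empty by simp
next
  case (insert B P) then show ?case using clopen_Un by simp
qed

lemma FA_sum:
  assumes nu: "\<nu> \<in> FA E"
  shows "finite P \<Longrightarrow> (\<forall>B\<in>P. clopen_ends E B) \<Longrightarrow> (\<forall>B\<in>P. \<forall>C\<in>P. B \<noteq> C \<longrightarrow> B \<inter> C = {})
     \<Longrightarrow> \<nu> (\<Union>P) = (\<Sum>B\<in>P. \<nu> B)"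
proof (induction P rule: finite_induct)
  case empty then show ?case using FA_empty[OF nu] by simp
next
  case (insert B P)
  have cB: "clopen_ends E B" using insert.prems(1) by simp
  have cP: "clopen_ends E (\<Union>P)" using insert.prems(1) clopen_Union[OF insert.hyps(1)] by simp
  have "B \<inter> \<Union>P = {}"
  proof (rule ccontr)
    assume "B \<inter> \<Union>P \<noteq> {}"
    then obtain C x where "C \<in> P" "x \<in> B" "x \<in> C" by blast
    moreover have "B \<noteq> C" using \<open>C \<in> P\<close> insert.hyps(2) by blast
    ultimately show False using insert.prems(2) by blast
  qed
  then have "\<nu> (B \<union> \<Union>P) = \<nu> B + \<nu> (\<Union>P)" by (rule FA_add[OF nu cB cP])
  moreover have "\<nu> (\<Union>P) = (\<Sum>B\<in>P. \<nu> B)" using insert.IH insert.prems by simp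
  ultimately show ?case using insert.hyps by simp
qed

lemma act_fa_FA:
  assumes g: "\<gamma> \<in> Aut E" and nu: "\<nu> \<in> FA E"
  shows "act_fa E \<gamma> \<nu> \<in> FA E"
  unfolding FA_def
proof (intro CollectI allI impI)
  fix A B assume h: "clopen_ends E A \<and> clopen_ends E B \<and> A \<inter> B = {}"
  let ?pA = "{\<omega> \<in> ends E. act_end \<gamma> \<omega> \<in> A}" and ?pB = "{\<omega> \<in> ends E. act_end \<gamma> \<omega> \<in> B}"
  have "{\<omega> \<in> ends E. act_end \<gamma> \<omega> \<in> A \<union> B} = ?pA \<union> ?pB" by blast
  moreover have "?pA \<inter> ?pB = {}" using h by blast
  moreover have "clopen_ends E ?pA" "clopen_ends E ?pB" using pre_clopen[OF g] h by blast+
  ultimately show "act_fa E \<gamma> \<nu> (A \<union> B) = act_fa E \<gamma> \<nu> A + act_fa E \<gamma> \<nu> B"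
    unfolding act_fa_def using nu unfolding FA_def by simp
qed

definition valid :: "(nat \<Rightarrow> 'v) set set \<Rightarrow> ((nat \<Rightarrow> 'v) set \<Rightarrow> complex) \<Rightarrow> (nat \<Rightarrow> 'v) set set set \<Rightarrow> bool" where
  "valid A g P \<longleftrightarrow> finite P \<and> \<Union>P = A
      \<and> (\<forall>B\<in>P. \<forall>C\<in>P. B \<noteq> C \<longrightarrow> B \<inter> C = {})
      \<and> (\<forall>B\<in>P. clopen_ends E B \<and> B \<noteq> {} \<and> (\<forall>\<omega>\<in>B. \<forall>\<omega>'\<in>B. g \<omega> = g \<omega>'))"

lemma int_eval:
  assumes ex: "\<exists>P. valid A g P" and nu: "\<nu> \<in> FA E"
    and loc: "\<And>B. clopen_ends E B \<Longrightarrow> B \<noteq> {} \<Longrightarrow> B \<subseteq> A \<Longrightarrow> (\<forall>\<omega>\<in>B. \<forall>\<omega>'\<in>B. g \<omega> = g \<omega>')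
       \<Longrightarrow> g (SOME \<omega>. \<omega> \<in> B) * \<mu> B = \<nu> B"
  shows "fa_integral E A g \<mu> = \<nu> A"
proof -
  have all: "(\<Sum>B\<in>P. g (SOME \<omega>. \<omega> \<in> B) * \<mu> B) = \<nu> A" if v: "valid A g P" for P
  proof -
    have "(\<Sum>B\<in>P. g (SOME \<omega>. \<omega> \<in> B) * \<mu> B) = (\<Sum>B\<in>P. \<nu> B)"
    proof (rule sum.cong)
      fix B assume B: "B \<in> P"
      have "clopen_ends E B" "B \<noteq> {}" "\<forall>\<omega>\<in>B. \<forall>\<omega>'\<in>B. g \<omega> = g \<omega>'" "B \<subseteq> A"
        using v B unfolding valid_def by blast+
      then show "g (SOME \<omega>. \<omega> \<in> B) * \<mu> B = \<nu> B" using loc by blast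
    qed simp
    also have "\<dots> = \<nu> (\<Union>P)"
    proof -
      have "finite P" "\<forall>B\<in>P. clopen_ends E B" "\<forall>B\<in>P. \<forall>C\<in>P. B \<noteq> C \<longrightarrow> B \<inter> C = {}"
        using v unfolding valid_def by blast+
      then show ?thesis using FA_sum[OF nu] by simp
    qed
    finally show ?thesis using v unfolding valid_def by simp
  qed
  obtain P where P: "valid A g P" using ex by blast
  have "\<exists>s. \<exists>P. valid A g P \<and> s = (\<Sum>B\<in>P. g (SOME \<omega>. \<omega> \<in> B) * \<mu> B)" using P by blast
  then have "\<exists>P. valid A g P \<and> (SOME s. \<exists>P. valid A g P \<and> s = (\<Sum>B\<in>P. g (SOME \<omega>. \<omega> \<in> B) * \<mu> B)) = (\<Sum>B\<in>P. g (SOME \<omega>. \<omega> \<in> B) * \<mu> B)"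
    by (rule someI_ex)
  moreover have "fa_integral E A g \<mu> = (SOME s. \<exists>P. valid A g P \<and> s = (\<Sum>B\<in>P. g (SOME \<omega>. \<omega> \<in> B) * \<mu> B))"
    unfolding fa_integral_def valid_def conj_assoc by (rule refl)
  ultimately have "\<exists>P. valid A g P \<and> fa_integral E A g \<mu> = (\<Sum>B\<in>P. g (SOME \<omega>. \<omega> \<in> B) * \<mu> B)"
    by simp
  then show ?thesis using all by auto
qed

lemma FA_scale: "\<mu> \<in> FA E \<Longrightarrow> (\<lambda>B. c * \<mu> B) \<in> FA E"
  unfolding FA_def by (simp add: distrib_left)

end

lemma pow_rel:
  fixes z X Y :: complex
  assumes "z \<noteq> 0"
  shows "z ^ m * X = z ^ n * Y \<longleftrightarrow> Y = z powi (int m - int n) * X"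
proof -
  define K where "K = z powi (int m - int n)"
  have "K = z ^ m / z ^ n" using power_int_diff[of z "int m" "int n"] assms unfolding K_def by simp
  moreover have nz: "z ^ n \<noteq> 0" using assms by simp
  ultimately have K: "z ^ m = z ^ n * K" by simp
  have "z ^ m * X = z ^ n * Y \<longleftrightarrow> z ^ n * (K * X) = z ^ n * Y" unfolding K by (simp add: mult.assoc)
  also have "\<dots> \<longleftrightarrow> K * X = Y" using nz assms by simp
  finally show ?thesis unfolding K_def by auto
qed

context tr begin

definition goodP where
  "goodP b A N P \<longleftrightarrow> finite P \<and> \<Union>P = A \<and> (\<forall>B\<in>P. \<forall>C\<in>P. B \<noteq> C \<longrightarrow> B \<inter> C = {})
     \<and> (\<forall>C\<in>P. clopen_ends E C \<and> C \<noteq> {} \<and> C \<subseteq> A \<and>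
          (\<exists>a c. E a c \<and> tdist E b a = N \<and> tdist E b c = Suc N \<and> C = fwd E (a, c)))"

lemma DEC0:
  assumes lf: "locally_finite_graph E" and cA: "clopen_ends E A"
  shows "\<exists>N \<ge> N0. \<exists>P. finite P \<and> \<Union>P = A \<and> (\<forall>B\<in>P. \<forall>C\<in>P. B \<noteq> C \<longrightarrow> B \<inter> C = {})
     \<and> (\<forall>C\<in>P. clopen_ends E C \<and> C \<noteq> {} \<and> C \<subseteq> A \<and>
          (\<exists>a c. E a c \<and> tdist E b a = N \<and> tdist E b c = Suc N \<and> C = fwd E (a, c)))"
proof -
  have Asub: "A \<subseteq> ends E" using clopen_sub[OF cA] .
  obtain N1 where N1: "\<forall>\<omega>\<in>ends E. dec A b \<omega> N1" using compact_dec[OF lf cA] by blast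
  define N where "N = max N0 N1"
  have decN: "dec A b \<omega> (Suc N)" if "\<omega> \<in> ends E" for \<omega>
    using dec_mono[OF that] N1 that unfolding N_def by fastforce
  define cn where "cn = (\<lambda>\<omega>. cone E b (Suc N) (ray_to E b \<omega> (Suc N)))"
  define P where "P = cn ` A"
  have "P = (\<lambda>v. cone E b (Suc N) v) ` ((\<lambda>\<omega>. ray_to E b \<omega> (Suc N)) ` A)"
    unfolding P_def cn_def by (simp add: image_image)
  then have fP: "finite P" using level_finite[OF lf Asub] by simp
  have sub: "cn \<omega> \<subseteq> A" if "\<omega> \<in> A" for \<omega>
  proof -
    have "\<omega> \<in> cn \<omega>" using cone_self Asub that unfolding cn_def by blast
    then show ?thesis using decN[of \<omega>] Asub that unfolding dec_def cn_def by blast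
  qed
  have U: "\<Union>P = A"
  proof
    show "\<Union>P \<subseteq> A" using sub unfolding P_def by blast
    show "A \<subseteq> \<Union>P" using cone_self Asub unfolding P_def cn_def by blast
  qed
  have D: "\<forall>B\<in>P. \<forall>C\<in>P. B \<noteq> C \<longrightarrow> B \<inter> C = {}"
  proof (intro ballI impI)
    fix B C assume B: "B \<in> P" and C: "C \<in> P" and ne: "B \<noteq> C"
    obtain \<omega>1 where w1: "\<omega>1 \<in> A" "B = cn \<omega>1" using B unfolding P_def by blast
    obtain \<omega>2 where w2: "\<omega>2 \<in> A" "C = cn \<omega>2" using C unfolding P_def by blast
    show "B \<inter> C = {}"
    proof (rule ccontr)
      assume "B \<inter> C \<noteq> {}"
      then obtain x where "x \<in> B" "x \<in> C" by blast
      then have "ray_to E b \<omega>1 (Suc N) = ray_to E b \<omega>2 (Suc N)"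
        using w1 w2 unfolding cn_def cone_def by auto
      then show False using ne w1 w2 unfolding cn_def by simp
    qed
  qed
  have C: "\<forall>C\<in>P. clopen_ends E C \<and> C \<noteq> {} \<and> C \<subseteq> A \<and>
          (\<exists>a c. E a c \<and> tdist E b a = N \<and> tdist E b c = Suc N \<and> C = fwd E (a, c))"
  proof
    fix C assume C: "C \<in> P"
    obtain \<omega> where w: "\<omega> \<in> A" "C = cn \<omega>" using C unfolding P_def by blast
    have om: "\<omega> \<in> ends E" using w Asub by blast
    let ?a = "ray_to E b \<omega> N" and ?c = "ray_to E b \<omega> (Suc N)"
    have e: "E ?a ?c" using geod_E[OF RT_geod[OF om]] by blast
    have Cf: "C = fwd E (?a, ?c)" using cone_fwd[OF om, of b N] w unfolding cn_def by simp
    have "C \<noteq> {}" using cone_self[OF om] w unfolding cn_def by blast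
    moreover have "clopen_ends E C" using fwd_clopen[OF e] Cf by simp
    moreover have "C \<subseteq> A" using sub w by simp
    moreover have "tdist E b ?a = N" "tdist E b ?c = Suc N" using RT_dist[OF om] by auto
    ultimately show "clopen_ends E C \<and> C \<noteq> {} \<and> C \<subseteq> A \<and>
          (\<exists>a c. E a c \<and> tdist E b a = N \<and> tdist E b c = Suc N \<and> C = fwd E (a, c))"
      using e Cf by blast
  qed
  have "N0 \<le> N" unfolding N_def by simp
  then show ?thesis using fP U D C by blast
qed

lemma DEC:
  assumes lf: "locally_finite_graph E" and cA: "clopen_ends E A"
  shows "\<exists>N \<ge> N0. \<exists>P. goodP b A N P"
  unfolding goodP_def
  using DEC0[OF lf cA] .


end

theorem mainTheorem18:
  fixes E :: "'v \<Rightarrow> 'v \<Rightarrow> bool" and b :: 'v and z :: complex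
    and \<nu> :: "(nat \<Rightarrow> 'v) set set \<Rightarrow> complex" and \<gamma> :: "'v \<Rightarrow> 'v"
  assumes "is_tree E" and "locally_finite_graph E" and "no_leaves E"
    and "z \<noteq> 0" and "\<nu> \<in> FA E" and "\<gamma> \<in> Aut E"
  shows "(\<forall>A. clopen_ends E A \<longrightarrow> pi_z E b z \<gamma> \<nu> A = \<nu> A) \<longleftrightarrow>
    (\<forall>e \<in> oriented_edges E. points_away E e b \<and> points_away E e (inv \<gamma> b) \<longrightarrow>
       z ^ tdist E b (fst e) * \<nu> (fwd E e)
         = z ^ tdist E b (\<gamma> (fst e)) * \<nu> (fwd E (\<gamma> (fst e), \<gamma> (snd e))))"
proof -
  interpret tr E by (rule tr.intro) (rule assms(1))
  note g = assms(6) and nu = assms(5) and lf = assms(2) and z0 = assms(4)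
  define gg where "gg = (\<lambda>\<omega>. z powi horo E \<omega> (\<gamma> b) b)"
  define nu' where "nu' = act_fa E \<gamma> \<nu>"
  have nu'FA: "nu' \<in> FA E" using act_fa_FA[OF g nu] unfolding nu'_def .
  have piz: "pi_z E b z \<gamma> \<nu> A = fa_integral E A gg nu'" for A unfolding pi_z_def gg_def nu'_def ..
  have L1: "gg \<omega> = z powi (int (tdist E (\<gamma> b) a) - int (tdist E b a))"
    if "\<omega> \<in> fwd E (a, c)" "tdist E (\<gamma> b) c = tdist E (\<gamma> b) a + 1" "tdist E b c = tdist E b a + 1" for \<omega> a c
    unfolding gg_def using horo_val[OF that] by simp
  have pre: "nu' (fwd E (a, c)) = \<nu> (fwd E (inv \<gamma> a, inv \<gamma> c))" for a c
    unfolding nu'_def act_fa_def using pre_fwd[OF g] by simp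
  show ?thesis
  proof
    assume H1: "\<forall>A. clopen_ends E A \<longrightarrow> pi_z E b z \<gamma> \<nu> A = \<nu> A"
    show "\<forall>e \<in> oriented_edges E. points_away E e b \<and> points_away E e (inv \<gamma> b) \<longrightarrow>
       z ^ tdist E b (fst e) * \<nu> (fwd E e)
         = z ^ tdist E b (\<gamma> (fst e)) * \<nu> (fwd E (\<gamma> (fst e), \<gamma> (snd e)))"
    proof (intro ballI impI)
      fix e assume e: "e \<in> oriented_edges E" and pa: "points_away E e b \<and> points_away E e (inv \<gamma> b)"
      obtain a c where ac: "e = (a, c)" by (cases e)
      have eE: "E a c" using e ac unfolding oriented_edges_def by simp
      have aw1: "tdist E b c = tdist E b a + 1" using pa ac unfolding points_away_def by simp
      have aw2: "tdist E (inv \<gamma> b) c = tdist E (inv \<gamma> b) a + 1" using pa ac unfolding points_away_def by simp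
      have gE: "E (\<gamma> a) (\<gamma> c)" using aut_E[OF g] eE by simp
      define A where "A = fwd E (\<gamma> a, \<gamma> c)"
      have cA: "clopen_ends E A" using fwd_clopen[OF gE] unfolding A_def .
      have awA1: "tdist E b (\<gamma> c) = tdist E b (\<gamma> a) + 1"
        using aw2 aut_d[OF g, of "inv \<gamma> b" c] aut_d[OF g, of "inv \<gamma> b" a] aut_f_inv[OF g] by simp
      have awA2: "tdist E (\<gamma> b) (\<gamma> c) = tdist E (\<gamma> b) (\<gamma> a) + 1" using aw1 aut_d[OF g] by simp
      define K where "K = z powi (int (tdist E (\<gamma> b) (\<gamma> a)) - int (tdist E b (\<gamma> a)))"
      have gK: "gg \<omega> = K" if "\<omega> \<in> A" for \<omega> using L1[OF _ awA2 awA1] that unfolding A_def K_def by blast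
      have "fa_integral E A gg nu' = K * nu' A"
      proof (rule int_eval[where \<nu> = "\<lambda>B. K * nu' B"])
        show "\<exists>P. valid A gg P"
        proof (cases "A = {}")
          case True then show ?thesis by (intro exI[of _ "{}"]) (simp add: valid_def)
        next
          case False
          have "valid A gg {A}" unfolding valid_def using False cA gK by simp
          then show ?thesis by blast
        qed
        show "(\<lambda>B. K * nu' B) \<in> FA E" using FA_scale[OF nu'FA] .
      next
        fix B assume B: "clopen_ends E B" "B \<noteq> {}" "B \<subseteq> A"
        then have "(SOME \<omega>. \<omega> \<in> B) \<in> B" by (simp add: some_in_eq)
        then show "gg (SOME \<omega>. \<omega> \<in> B) * nu' B = K * nu' B" using gK B(3) by auto
      qed
      moreover have "nu' A = \<nu> (fwd E (a, c))" using pre[of "\<gamma> a" "\<gamma> c"] aut_inv_f[OF g] unfolding A_def by simp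
      moreover have "pi_z E b z \<gamma> \<nu> A = \<nu> A" using H1 cA by blast
      ultimately have eq: "\<nu> A = K * \<nu> (fwd E (a, c))" using piz by simp
      have "K = z powi (int (tdist E b a) - int (tdist E b (\<gamma> a)))" unfolding K_def using aut_d[OF g] by simp
      then have "z ^ tdist E b a * \<nu> (fwd E (a, c)) = z ^ tdist E b (\<gamma> a) * \<nu> A"
        using pow_rel[OF z0] eq by simp
      then show "z ^ tdist E b (fst e) * \<nu> (fwd E e) = z ^ tdist E b (\<gamma> (fst e)) * \<nu> (fwd E (\<gamma> (fst e), \<gamma> (snd e)))"
        using ac unfolding A_def by simp
    qed
  next
    assume H2: "\<forall>e \<in> oriented_edges E. points_away E e b \<and> points_away E e (inv \<gamma> b) \<longrightarrow>
       z ^ tdist E b (fst e) * \<nu> (fwd E e)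
         = z ^ tdist E b (\<gamma> (fst e)) * \<nu> (fwd E (\<gamma> (fst e), \<gamma> (snd e)))"
    have H2': "z ^ tdist E b a * \<nu> (fwd E (a, c)) = z ^ tdist E b (\<gamma> a) * \<nu> (fwd E (\<gamma> a, \<gamma> c))"
      if h: "E a c" "tdist E b c = tdist E b a + 1" "tdist E (inv \<gamma> b) c = tdist E (inv \<gamma> b) a + 1" for a c
    proof -
      have "(a, c) \<in> oriented_edges E" using h unfolding oriented_edges_def by simp
      moreover have "points_away E (a, c) b \<and> points_away E (a, c) (inv \<gamma> b)"
        using h unfolding points_away_def by simp
      ultimately have "z ^ tdist E b (fst (a, c)) * \<nu> (fwd E (a, c))
         = z ^ tdist E b (\<gamma> (fst (a, c))) * \<nu> (fwd E (\<gamma> (fst (a, c)), \<gamma> (snd (a, c))))"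
        using H2 by blast
      then show ?thesis by simp
    qed
    have cone_eq: "\<nu> (fwd E (a, c)) = z powi (int (tdist E (\<gamma> b) a) - int (tdist E b a)) * nu' (fwd E (a, c))"
      if h: "E a c" "tdist E b c = tdist E b a + 1" "tdist E (\<gamma> b) c = tdist E (\<gamma> b) a + 1" for a c
    proof -
      define a' where "a' = inv \<gamma> a"
      define c' where "c' = inv \<gamma> c"
      have ga: "\<gamma> a' = a" "\<gamma> c' = c" unfolding a'_def c'_def using aut_f_inv[OF g] by auto
      have e': "E a' c'" using aut_E[OF g, of a' c'] ga h(1) by simp
      have d1: "tdist E b c' = tdist E (\<gamma> b) c" "tdist E b a' = tdist E (\<gamma> b) a"
        using aut_d[OF g, of b c'] aut_d[OF g, of b a'] ga by auto
      have d2: "tdist E (inv \<gamma> b) c' = tdist E b c" "tdist E (inv \<gamma> b) a' = tdist E b a"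
        using aut_d[OF aut_inv[OF g], of b c] aut_d[OF aut_inv[OF g], of b a] unfolding a'_def c'_def by auto
      have "z ^ tdist E b a' * \<nu> (fwd E (a', c')) = z ^ tdist E b (\<gamma> a') * \<nu> (fwd E (\<gamma> a', \<gamma> c'))"
        by (rule H2'[OF e']) (use d1 d2 h in simp_all)
      then have "z ^ tdist E b a' * \<nu> (fwd E (a', c')) = z ^ tdist E b a * \<nu> (fwd E (a, c))" using ga by simp
      then have "\<nu> (fwd E (a, c)) = z powi (int (tdist E b a') - int (tdist E b a)) * \<nu> (fwd E (a', c'))"
        using pow_rel[OF z0] by simp
      moreover have "nu' (fwd E (a, c)) = \<nu> (fwd E (a', c'))" using pre unfolding a'_def c'_def by simp
      ultimately show ?thesis using d1 by simp
    qed
    show "\<forall>A. clopen_ends E A \<longrightarrow> pi_z E b z \<gamma> \<nu> A = \<nu> A"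
    proof (intro allI impI)
      fix A assume cA: "clopen_ends E A"
      have "fa_integral E A gg nu' = \<nu> A"
      proof (rule int_eval[OF _ nu])
        obtain N where N: "tdist E b (\<gamma> b) \<le> N" and exP: "\<exists>P. goodP b A N P"
          using DEC[OF lf cA, of "tdist E b (\<gamma> b)"] by blast
        then obtain P where P: "goodP b A N P" by blast
        have NP: "finite P" "\<Union>P = A" "\<forall>B\<in>P. \<forall>C\<in>P. B \<noteq> C \<longrightarrow> B \<inter> C = {}"
          "\<forall>C\<in>P. clopen_ends E C \<and> C \<noteq> {} \<and> C \<subseteq> A \<and>
              (\<exists>a c. E a c \<and> tdist E b a = N \<and> tdist E b c = Suc N \<and> C = fwd E (a, c))"
          using conjunct1[OF P[unfolded goodP_def]] conjunct1[OF conjunct2[OF P[unfolded goodP_def]]]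
            conjunct1[OF conjunct2[OF conjunct2[OF P[unfolded goodP_def]]]]
            conjunct2[OF conjunct2[OF conjunct2[OF P[unfolded goodP_def]]]] by fast+
        have cst: "\<forall>C\<in>P. \<forall>\<omega>\<in>C. \<forall>\<omega>'\<in>C. gg \<omega> = gg \<omega>'"
        proof (intro ballI)
          fix C \<omega> \<omega>' assume C: "C \<in> P" and w: "\<omega> \<in> C" "\<omega>' \<in> C"
          have "\<exists>a c. E a c \<and> tdist E b a = N \<and> tdist E b c = Suc N \<and> C = fwd E (a, c)"
            using NP(4) C by blast
          then obtain a c where ac: "E a c" "tdist E b a = N" "tdist E b c = Suc N" "C = fwd E (a, c)"
            by (elim exE conjE)
          have aw: "tdist E (\<gamma> b) c = tdist E (\<gamma> b) a + 1"
            by (rule away_far[OF ac(1), where b=b]) (use ac N in simp_all)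
          have aw0: "tdist E b c = tdist E b a + 1" using ac by simp
          have "gg \<omega> = z powi (int (tdist E (\<gamma> b) a) - int (tdist E b a))" using L1[OF _ aw aw0] w(1) ac(4) by simp
          moreover have "gg \<omega>' = z powi (int (tdist E (\<gamma> b) a) - int (tdist E b a))" using L1[OF _ aw aw0] w(2) ac(4) by simp
          ultimately show "gg \<omega> = gg \<omega>'" by simp
        qed
        have cl: "\<forall>C\<in>P. clopen_ends E C \<and> C \<noteq> {}" using NP(4) by blast
        have v4: "\<forall>B\<in>P. clopen_ends E B \<and> B \<noteq> {} \<and> (\<forall>\<omega>\<in>B. \<forall>\<omega>'\<in>B. gg \<omega> = gg \<omega>')"
          using cl cst by blast
        have "valid A gg P" unfolding valid_def
          apply (intro conjI)
          apply (rule NP(1))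
          apply (rule NP(2))
          apply (rule NP(3))
          apply (rule v4)
          done
        then show "\<exists>P. valid A gg P" by blast
      next
        fix B assume B: "clopen_ends E B" "B \<noteq> {}" "B \<subseteq> A" and cst: "\<forall>\<omega>\<in>B. \<forall>\<omega>'\<in>B. gg \<omega> = gg \<omega>'"
        define k where "k = gg (SOME \<omega>. \<omega> \<in> B)"
        have kB: "gg \<omega> = k" if wB: "\<omega> \<in> B" for \<omega>
        proof -
          have "(SOME \<omega>. \<omega> \<in> B) \<in> B" using B(2) by (simp add: some_in_eq)
          then show ?thesis using cst wB unfolding k_def by blast
        qed
        obtain N where N: "tdist E b (\<gamma> b) \<le> N" and exQ: "\<exists>Q. goodP b B N Q"
          using DEC[OF lf B(1), of "tdist E b (\<gamma> b)"] by blast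
        then obtain Q where Q: "goodP b B N Q" by blast
        have NQ: "finite Q" "\<Union>Q = B" "\<forall>C1\<in>Q. \<forall>C2\<in>Q. C1 \<noteq> C2 \<longrightarrow> C1 \<inter> C2 = {}"
          "\<forall>C\<in>Q. clopen_ends E C \<and> C \<noteq> {} \<and> C \<subseteq> B \<and>
              (\<exists>a c. E a c \<and> tdist E b a = N \<and> tdist E b c = Suc N \<and> C = fwd E (a, c))"
          using conjunct1[OF Q[unfolded goodP_def]] conjunct1[OF conjunct2[OF Q[unfolded goodP_def]]]
            conjunct1[OF conjunct2[OF conjunct2[OF Q[unfolded goodP_def]]]]
            conjunct2[OF conjunct2[OF conjunct2[OF Q[unfolded goodP_def]]]] by fast+
        have each: "k * nu' C = \<nu> C" if C: "C \<in> Q" for C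
        proof -
          have "\<exists>a c. E a c \<and> tdist E b a = N \<and> tdist E b c = Suc N \<and> C = fwd E (a, c)"
            using NQ(4) C by blast
          then obtain a c where ac: "E a c" "tdist E b a = N" "tdist E b c = Suc N" "C = fwd E (a, c)"
            by (elim exE conjE)
          have aw: "tdist E (\<gamma> b) c = tdist E (\<gamma> b) a + 1"
            by (rule away_far[OF ac(1), where b=b]) (use ac N in simp_all)
          have aw0: "tdist E b c = tdist E b a + 1" using ac by simp
          have "C \<noteq> {}" "C \<subseteq> B" using NQ(4) C by blast+
          then obtain \<omega> where w: "\<omega> \<in> C" "\<omega> \<in> B" by blast
          have "k = gg \<omega>" using kB[OF w(2)] by simp
          also have "\<dots> = z powi (int (tdist E (\<gamma> b) a) - int (tdist E b a))"
            using L1[OF _ aw aw0] w(1) ac(4) by simp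
          finally show ?thesis using cone_eq[OF ac(1) aw0 aw] ac(4) by simp
        qed
        have cQ: "\<forall>C\<in>Q. clopen_ends E C" using NQ(4) by blast
        have "k * nu' B = k * (\<Sum>C\<in>Q. nu' C)" using FA_sum[OF nu'FA NQ(1) cQ NQ(3)] NQ(2) by simp
        also have "\<dots> = (\<Sum>C\<in>Q. k * nu' C)" by (simp add: sum_distrib_left)
        also have "\<dots> = (\<Sum>C\<in>Q. \<nu> C)" using each by simp
        also have "\<dots> = \<nu> B" using FA_sum[OF nu NQ(1) cQ NQ(3)] NQ(2) by simp
        finally show "gg (SOME \<omega>. \<omega> \<in> B) * nu' B = \<nu> B" unfolding k_def .
      qed
      then show "pi_z E b z \<gamma> \<nu> A = \<nu> A" using piz by simp
    qed
  qed
qed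


end
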